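(* For all complex $q$ with $|q|<1$, $$\psi(q^3)\psi(q^5)=\varphi(q^{60})\psi(q^8)+q^{14}\varphi(q^4)\psi(q^{120})+q^3\psi(q^{12})\psi(q^{20})+q^5\varphi(q^{40})\psi(q^{48})+q^9\varphi(q^{24})\psi(q^{80}),$$ $$\psi(q)\psi(q^{15})=\varphi(q^{120})\psi(q^{16})+q^{28}\varphi(q^8)\psi(q^{240})+q^6\psi(q^4)\psi(q^{60})+q\varphi(q^{20})\psi(q^{24})+q^3\varphi(q^{12})\psi(q^{40}).$$
   Context: Ramanujan's theta functions are $\varphi(q)=\sum_{n=-\infty}^{\infty}q^{n^2}$ and $\psi(q)=\sum_{n=0}^{\infty}q^{n(n+1)/2}$ for $|q|<1$. *)

theory Defs
  imports "HOL-Analysis.Analysis"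
begin

definition ram_phi :: "complex \<Rightarrow> complex" where
  "ram_phi q = (\<Sum>\<^sub>\<infinity>n::int. q ^ (nat (n^2)))"

definition ram_psi :: "complex \<Rightarrow> complex" where
  "ram_psi q = (\<Sum>n::nat. q ^ (n * (n + 1) div 2))"

end

theory Submission
  imports Defs
begin


definition T :: "int \<Rightarrow> int" where "T b = b*(b+1) div 2"

lemma T2: "2 * T b = b*(b+1)"
proof -
  have "even (b*(b+1))" by auto
  then show ?thesis unfolding T_def by simp
qed

lemma T_nonneg: "0 \<le> T b"
proof -
  have "0 \<le> b*(b+1)" 
    by (cases "b \<ge> 0") (auto simp: mult_nonneg_nonneg mult_nonpos_nonpos)
  then show ?thesis using T2[of b] by linarith
qed

lemma sq_odd: "(2*b+1)^2 = 8 * T b + 1"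
  using T2[of b] by (simp add: power2_eq_square algebra_simps)

lemma nat_geo:
  fixes q :: complex
  assumes "norm q < 1" "\<And>n. n \<le> e n"
  shows "summable (\<lambda>n. norm (q ^ e n))"
proof (rule summable_comparison_test[of _ "\<lambda>n. norm q ^ n"])
  show "\<exists>N. \<forall>n\<ge>N. norm (norm (q ^ e n)) \<le> norm q ^ n"
    using assms by (auto simp: norm_power intro!: power_decreasing)
  show "summable (\<lambda>n. norm q ^ n)" using assms by (simp add: summable_geometric)
qed

lemma int_has_sum:
  fixes f :: "int \<Rightarrow> 'a::{topological_comm_monoid_add, t2_space}"
  assumes "((\<lambda>n. f (int n)) has_sum A) UNIV" "((\<lambda>n. f (-int n - 1)) has_sum B) UNIV"
  shows "(f has_sum (A+B)) UNIV"
proof -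
  have 1: "(f has_sum A) (range int)"
    using has_sum_reindex[of int UNIV f A] assms(1) by (simp add: o_def inj_on_def)
  have 2: "(f has_sum B) (range (\<lambda>n. -int n - 1))"
    using has_sum_reindex[of "\<lambda>n. -int n - 1" UNIV f B] assms(2) by (simp add: o_def inj_on_def)
  have "(f has_sum (A+B)) (range int \<union> range (\<lambda>n. -int n - 1))"
    by (rule has_sum_Un_disjoint[OF 1 2]) auto
  moreover have "range int \<union> range (\<lambda>n. -int n - 1) = UNIV"
  proof -
    have "x \<in> range int \<union> range (\<lambda>n. -int n - 1)" for x :: int
    proof (cases "x \<ge> 0")
      case True then show ?thesis by (auto intro: image_eqI[of _ _ "nat x"])
    next
      case False then show ?thesis by (auto intro!: image_eqI[of _ _ "nat (-x-1)"])
    qed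
    then show ?thesis by auto
  qed
  ultimately show ?thesis by simp
qed

lemma nat_has_sum:
  fixes q :: complex
  assumes "norm q < 1" "\<And>n. n \<le> e n"
  shows "((\<lambda>n. q ^ e n) has_sum (\<Sum>n. q ^ e n)) UNIV"
    "((\<lambda>n. norm (q ^ e n)) has_sum (\<Sum>n. norm (q ^ e n))) UNIV"
proof -
  have s: "summable (\<lambda>n. norm (q ^ e n))" by (rule nat_geo[OF assms])
  show "((\<lambda>n. q ^ e n) has_sum (\<Sum>n. q ^ e n)) UNIV"
    by (rule norm_summable_imp_has_sum[OF s]) (rule summable_sums[OF summable_norm_cancel[OF s]])
  show "((\<lambda>n. norm (q ^ e n)) has_sum (\<Sum>n. norm (q ^ e n))) UNIV"
    by (rule norm_summable_imp_has_sum) (use s in \<open>simp_all add: summable_sums\<close>)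
qed

lemma Tnat: "nat (T (int n)) = n*(n+1) div 2"
proof -
  have "int (n*(n+1) div 2) = int (n*(n+1)) div 2" by (simp only: zdiv_int) simp
  also have "\<dots> = T (int n)" unfolding T_def by (simp add: algebra_simps)
  finally have "int (n*(n+1) div 2) = T (int n)" .
  then show ?thesis by linarith
qed

lemma Tneg: "T (-b-1) = T b"
  unfolding T_def by (simp add: algebra_simps)

lemma psi_Z:
  fixes q :: complex
  assumes "norm q < 1"
  shows "((\<lambda>b. q ^ nat (T b)) has_sum (2 * ram_psi q)) UNIV"
    "(\<lambda>b. norm (q ^ nat (T b))) summable_on UNIV"
proof -
  have e: "n \<le> n*(n+1) div 2" for n :: nat
  proof -
    have "2*n \<le> n*(n+1)" by (cases n) auto
    then show ?thesis by linarith
  qed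
  note h = nat_has_sum[of q "\<lambda>n. n*(n+1) div 2", OF assms e]
  have "((\<lambda>b. q ^ nat (T b)) has_sum (ram_psi q + ram_psi q)) UNIV"
    by (rule int_has_sum) (use h(1) in \<open>simp_all add: Tnat Tneg ram_psi_def\<close>)
  then show "((\<lambda>b. q ^ nat (T b)) has_sum (2 * ram_psi q)) UNIV" by simp
  have "((\<lambda>b. norm (q ^ nat (T b))) has_sum (\<Sum>n. norm (q ^ (n*(n+1) div 2))) + (\<Sum>n. norm (q ^ (n*(n+1) div 2)))) UNIV"
    by (rule int_has_sum) (use h(2) in \<open>simp_all add: Tnat Tneg\<close>)
  then show "(\<lambda>b. norm (q ^ nat (T b))) summable_on UNIV" using has_sum_imp_summable by blast
qed

lemma phi_Z:
  fixes q :: complex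
  assumes "norm q < 1"
  shows "((\<lambda>a. q ^ nat (a^2)) has_sum ram_phi q) UNIV"
    "(\<lambda>a. norm (q ^ nat (a^2))) summable_on UNIV"
proof -
  have e1: "n \<le> n^2" for n :: nat by (simp add: power2_eq_square)
  have e2: "n \<le> (n+1)^2" for n :: nat by (simp add: power2_eq_square)
  have c1: "nat ((int n)^2) = n^2" for n by (simp add: nat_power_eq)
  have c2: "nat ((-int n - 1)^2) = (n+1)^2" for n
  proof -
    have "(-int n - 1)^2 = (int n + 1)^2" by (simp add: power2_eq_square algebra_simps)
    also have "\<dots> = int ((n+1)^2)" by simp
    finally show ?thesis by (simp only: nat_int)
  qed
  note h1 = nat_has_sum[of q "\<lambda>n. n^2", OF assms e1]
  note h2 = nat_has_sum[of q "\<lambda>n. (n+1)^2", OF assms e2]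
  have "((\<lambda>a. q ^ nat (a^2)) has_sum ((\<Sum>n. q ^ (n^2)) + (\<Sum>n. q ^ ((n+1)^2)))) UNIV"
    by (rule int_has_sum) (use h1(1) h2(1) in \<open>simp_all add: c1 c2\<close>)
  then show "((\<lambda>a. q ^ nat (a^2)) has_sum ram_phi q) UNIV"
    unfolding ram_phi_def using infsumI by (metis (no_types, lifting))
  have "((\<lambda>a. norm (q ^ nat (a^2))) has_sum ((\<Sum>n. norm (q ^ (n^2))) + (\<Sum>n. norm (q ^ ((n+1)^2))))) UNIV"
    by (rule int_has_sum) (use h1(2) h2(2) in \<open>simp_all add: c1 c2\<close>)
  then show "(\<lambda>a. norm (q ^ nat (a^2))) summable_on UNIV" using has_sum_imp_summable by blast
qed

lemma has_sum_prod2: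
  fixes f g :: "int \<Rightarrow> complex"
  assumes "(f has_sum F) UNIV" "(g has_sum G) UNIV"
    "(\<lambda>a. norm (f a)) summable_on UNIV" "(\<lambda>b. norm (g b)) summable_on UNIV"
  shows "((\<lambda>(a,b). f a * g b) has_sum (F*G)) UNIV"
proof -
  have ns: "(\<lambda>(a,b). norm (f a * g b)) summable_on (UNIV \<times> UNIV)"
  proof (rule summable_on_SigmaI[where g = "\<lambda>a. norm (f a) * infsum (\<lambda>b. norm (g b)) UNIV"])
    show "((\<lambda>y. case (x, y) of (a, b) \<Rightarrow> norm (f a * g b)) has_sum norm (f x) * infsum (\<lambda>b. norm (g b)) UNIV) UNIV" for x
      using has_sum_cmult_right[OF assms(4)[unfolded summable_iff_has_sum_infsum], of "norm (f x)"]
      by (simp add: norm_mult)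
    show "(\<lambda>a. norm (f a) * infsum (\<lambda>b. norm (g b)) UNIV) summable_on UNIV"
      using assms(3) by (rule summable_on_cmult_left)
  qed auto
  have s: "(\<lambda>(a,b). f a * g b) summable_on (UNIV \<times> UNIV)"
    using ns by (subst summable_on_iff_abs_summable_on_complex) (simp add: case_prod_unfold)
  have "((\<lambda>(a,b). f a * g b) has_sum (F*G)) (UNIV \<times> UNIV)"
  proof (rule has_sum_SigmaI[where g = "\<lambda>a. f a * G"])
    show "((\<lambda>y. case (x, y) of (a, b) \<Rightarrow> f a * g b) has_sum f x * G) UNIV" for x
      using has_sum_cmult_right[OF assms(2)] by simp
    show "((\<lambda>a. f a * G) has_sum F * G) UNIV" using has_sum_cmult_left[OF assms(1)] by simp
  qed (use s in auto)
  then show ?thesis by simp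
qed

lemma term_sum:
  fixes h :: "int\<times>int \<Rightarrow> complex" and f g :: "int \<Rightarrow> complex"
  assumes "(f has_sum F) UNIV" "(g has_sum G) UNIV"
    "(\<lambda>a. norm (f a)) summable_on UNIV" "(\<lambda>b. norm (g b)) summable_on UNIV"
    and inv1: "\<And>a b. i (j (a,b)) = (a,b)" and inv2: "\<And>p. p \<in> S \<Longrightarrow> j (i p) = p"
    and mem: "\<And>a b. j (a,b) \<in> S"
    and hj: "\<And>a b. h (j (a,b)) = c * (f a * g b)"
  shows "(h has_sum (c*(F*G))) S"
proof -
  have "((\<lambda>(a,b). f a * g b) has_sum (F*G)) UNIV" by (rule has_sum_prod2[OF assms(1-4)])
  then have 1: "((\<lambda>p. c * (case p of (a,b) \<Rightarrow> f a * g b)) has_sum (c*(F*G))) UNIV"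
    by (rule has_sum_cmult_right)
  have "((\<lambda>p. c * (case p of (a,b) \<Rightarrow> f a * g b)) has_sum (c*(F*G))) UNIV = (h has_sum (c*(F*G))) S"
  proof (rule has_sum_reindex_bij_witness[where i=i and j=j])
    show "\<And>a. a \<in> UNIV \<Longrightarrow> i (j a) = a" using inv1 by auto
    show "\<And>a. a \<in> UNIV \<Longrightarrow> j a \<in> S" using mem by auto
    show "\<And>b. b \<in> S \<Longrightarrow> j (i b) = b" using inv2 by auto
    show "\<And>b. b \<in> S \<Longrightarrow> i b \<in> UNIV" by auto
    show "\<And>a. a \<in> UNIV \<Longrightarrow> h (j a) = c * (case a of (a, b) \<Rightarrow> f a * g b)" using hj by auto
  qed simp
  with 1 show ?thesis by simp
qed

lemma powK:
  fixes q :: complex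
  assumes "0 \<le> u" "0 \<le> v"
  shows "q ^ nat (int c + int \<alpha> * u + int \<beta> * v) = q^c * ((q^\<alpha>)^nat u * (q^\<beta>)^nat v)"
proof -
  have "nat (int c + int \<alpha> * u + int \<beta> * v) = c + \<alpha> * nat u + \<beta> * nat v"
    using assms by (simp add: nat_add_distrib nat_mult_distrib)
  then show ?thesis by (simp add: power_add power_mult)
qed

definition h1 :: "complex \<Rightarrow> int\<times>int \<Rightarrow> complex" where
  "h1 q p = q ^ (nat ((3*(fst p)^2 + 5*(snd p)^2) div 8) - 1)"

definition h2 :: "complex \<Rightarrow> int\<times>int \<Rightarrow> complex" where
  "h2 q p = q ^ (nat (((fst p)^2 + 15*(snd p)^2) div 8) - 2)"

lemma h1_eq: "3*x^2+5*y^2 = 8*K+8 \<Longrightarrow> 0 \<le> K \<Longrightarrow> h1 q (x,y) = q ^ nat K"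
proof -
  assume a: "3*x^2+5*y^2 = 8*K+8" "0 \<le> K"
  then have "(3*x^2+5*y^2) div 8 = K + 1" by simp
  moreover have "nat (K + 1) - 1 = nat K" using a(2) by linarith
  ultimately show ?thesis unfolding h1_def by (simp only: fst_conv snd_conv)
qed

lemma h2_eq: "x^2+15*y^2 = 8*K+16 \<Longrightarrow> 0 \<le> K \<Longrightarrow> h2 q (x,y) = q ^ nat K"
proof -
  assume a: "x^2+15*y^2 = 8*K+16" "0 \<le> K"
  then have "(x^2+15*y^2) div 8 = K + 2" by simp
  moreover have "nat (K + 2) - 2 = nat K" using a(2) by linarith
  ultimately show ?thesis unfolding h2_def by (simp only: fst_conv snd_conv)
qed


lemma ev1: "(y::int) mod 2 = 1 \<Longrightarrow> (y + 2*K - 1) mod 2 = 0" by presburger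
lemma ev2: "(y::int) mod 2 = 1 \<Longrightarrow> U = 2*B+1 \<Longrightarrow> (y + 3*U) mod 2 = 0" by presburger
lemma ev3: "(y::int) mod 2 = 1 \<Longrightarrow> U = 2*B+1 \<Longrightarrow> (y + U) mod 2 = 0" by presburger

lemma inv_A1: "(x::int) - y = 16*K \<Longrightarrow> y + 6*K - 1 = 2*M \<Longrightarrow> 2*M + 1 + 10*K = x \<and> 2*M + 1 - 6*K = y"
  by presburger
lemma inv_A2: "(x::int) - y = 8*U \<Longrightarrow> x - y - 8 = 16*B \<Longrightarrow> y + 3*U = 2*M \<Longrightarrow> 2*M + 5*(2*B+1) = x \<and> 2*M - 3*(2*B+1) = y"
  by presburger
lemma inv_K4: "(x::int) - 3*y = 16*K \<Longrightarrow> y + 2*K - 1 = 2*M \<Longrightarrow> 3*(2*M+1) + 10*K = x \<and> (2*M+1) - 2*K = y"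
  by presburger
lemma inv_K5: "(x::int) - 3*y = 8*U \<Longrightarrow> x - 3*y - 8 = 16*B \<Longrightarrow> y + U = 2*M \<Longrightarrow> 6*M + 5*(2*B+1) = x \<and> 2*M - (2*B+1) = y"
  by presburger



lemma t1_O:
  fixes q :: complex
  assumes "norm q < 1"
  shows "(h1 q has_sum (q^0 * ((2 * ram_psi (q^3)) * (2 * ram_psi (q^5)))))
     {(x,y). x mod 2 = 1 \<and> y mod 2 = 1}"
proof (rule term_sum[where f="\<lambda>a. (q^3) ^ nat (T a)" and g="\<lambda>b. (q^5) ^ nat (T b)"
      and j="\<lambda>(a,b). (2*a+1, 2*b+1)" and i="\<lambda>(x,y). (x div 2, y div 2)"])
  have n: "norm (q^k) < 1" if "k > 0" for k using assms that by (simp add: norm_power power_less_one_iff)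
  show "((\<lambda>a. (q^3) ^ nat (T a)) has_sum (2 * ram_psi (q^3))) UNIV" "(\<lambda>a. norm ((q^3) ^ nat (T a))) summable_on UNIV"
    using psi_Z[OF n[of 3]] by auto
  show "((\<lambda>b. (q^5) ^ nat (T b)) has_sum 2 * ram_psi (q^5)) UNIV" "(\<lambda>b. norm ((q^5) ^ nat (T b))) summable_on UNIV"
    using psi_Z[OF n[of 5]] by auto
  show "(\<lambda>(x,y). (x div 2, y div 2)) ((\<lambda>(a,b). (2*a+1, 2*b+1)) (a, b)) = (a, b)" for a b :: int
    by (simp; presburger)
  show "(\<lambda>(a,b). (2*a+1, 2*b+1)) ((\<lambda>(x,y). (x div 2, y div 2)) p) = p"
    if "p \<in> {(x,y). x mod 2 = 1 \<and> y mod 2 = 1}" for p :: "int \<times> int"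
    using that by (cases p) (simp; presburger)
  show "(\<lambda>(a,b). (2*a+1, 2*b+1)) (a, b) \<in> {(x,y). x mod 2 = 1 \<and> y mod 2 = 1}" for a b :: int
    by (simp; presburger)
  show "h1 q ((\<lambda>(a,b). (2*a+1, 2*b+1)) (a, b)) = q^0 * ((q^3) ^ nat (T a) * (q^5) ^ nat (T b))" for a b :: int
  proof -
    have "3*(2*a+1)^2+5*(2*b+1)^2 = 8*(int 0 + int 3 * (T a) + int 5 * T b) + 8"
      using T2[of a] T2[of b] by simp algebra
    from h1_eq[OF this] have "h1 q (2*a+1, 2*b+1) = q ^ nat (int 0 + int 3 * (T a) + int 5 * T b)"
      by (simp add: T_nonneg)
    also have "\<dots> = q^0 * ((q^3) ^ nat (T a) * (q^5) ^ nat (T b))"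
      by (rule powK) (auto simp: T_nonneg)
    finally show ?thesis by simp
  qed
qed

lemma t1_A1:
  fixes q :: complex
  assumes "norm q < 1"
  shows "(h1 q has_sum (q^0 * (ram_phi (q^60) * (2 * ram_psi (q^8)))))
     {(x,y). x mod 2 = 1 \<and> y mod 2 = 1 \<and> (x-y) mod 16 = 0}"
proof (rule term_sum[where f="\<lambda>a. (q^60) ^ nat (a^2)" and g="\<lambda>b. (q^8) ^ nat (T b)"
      and j="\<lambda>(a,b). (2*b+1+10*a, 2*b+1-6*a)" and i="\<lambda>(x,y). ((x-y) div 16, (y + 6*((x-y) div 16) - 1) div 2)"])
  have n: "norm (q^k) < 1" if "k > 0" for k using assms that by (simp add: norm_power power_less_one_iff)
  show "((\<lambda>a. (q^60) ^ nat (a^2)) has_sum ram_phi (q^60)) UNIV" "(\<lambda>a. norm ((q^60) ^ nat (a^2))) summable_on UNIV"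
    using phi_Z[OF n[of 60]] by auto
  show "((\<lambda>b. (q^8) ^ nat (T b)) has_sum 2 * ram_psi (q^8)) UNIV" "(\<lambda>b. norm ((q^8) ^ nat (T b))) summable_on UNIV"
    using psi_Z[OF n[of 8]] by auto
  show "(\<lambda>(x,y). ((x-y) div 16, (y + 6*((x-y) div 16) - 1) div 2)) ((\<lambda>(a,b). (2*b+1+10*a, 2*b+1-6*a)) (a, b)) = (a, b)" for a b :: int
    by (simp; presburger)
  show "(\<lambda>(a,b). (2*b+1+10*a, 2*b+1-6*a)) ((\<lambda>(x,y). ((x-y) div 16, (y + 6*((x-y) div 16) - 1) div 2)) p) = p"
    if "p \<in> {(x,y). x mod 2 = 1 \<and> y mod 2 = 1 \<and> (x-y) mod 16 = 0}" for p :: "int \<times> int"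
  proof -
    obtain x y where p: "p = (x,y)" by (cases p)
    have c: "x mod 2 = 1" "y mod 2 = 1" "(x-y) mod 16 = 0" using that p by auto
    have km: "(x-y) mod 16 = 0" using c by simp
    have k: "x-y = 16 * ((x-y) div 16)" using km mult_div_mod_eq[of 16 "x-y"] by linarith
    have mm: "(y + 6*((x-y) div 16) - 1) mod 2 = 0" using ev1[OF c(2), of "3*((x-y) div 16)"] by simp
    have m: "y + 6*((x-y) div 16) - 1 = 2 * ((y + 6*((x-y) div 16) - 1) div 2)" using mm mult_div_mod_eq[of 2 "y + 6*((x-y) div 16) - 1"] by linarith
    have f: "2 * ((y + 6*((x-y) div 16) - 1) div 2) + 1 + 10 * ((x-y) div 16) = x" "2 * ((y + 6*((x-y) div 16) - 1) div 2) + 1 - 6 * ((x-y) div 16) = y" using inv_A1[OF k m] by auto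
    show ?thesis unfolding p using f by simp
  qed
  show "(\<lambda>(a,b). (2*b+1+10*a, 2*b+1-6*a)) (a, b) \<in> {(x,y). x mod 2 = 1 \<and> y mod 2 = 1 \<and> (x-y) mod 16 = 0}" for a b :: int
    by (simp; presburger)
  show "h1 q ((\<lambda>(a,b). (2*b+1+10*a, 2*b+1-6*a)) (a, b)) = q^0 * ((q^60) ^ nat (a^2) * (q^8) ^ nat (T b))" for a b :: int
  proof -
    have "3*(2*b+1+10*a)^2+5*(2*b+1-6*a)^2 = 8*(int 0 + int 60 * (a^2) + int 8 * T b) + 8"
      using T2[of a] T2[of b] by simp algebra
    from h1_eq[OF this] have "h1 q (2*b+1+10*a, 2*b+1-6*a) = q ^ nat (int 0 + int 60 * (a^2) + int 8 * T b)"
      by (simp add: T_nonneg)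
    also have "\<dots> = q^0 * ((q^60) ^ nat (a^2) * (q^8) ^ nat (T b))"
      by (rule powK) (auto simp: T_nonneg)
    finally show ?thesis by simp
  qed
qed

lemma t1_A2:
  fixes q :: complex
  assumes "norm q < 1"
  shows "(h1 q has_sum (q^14 * (ram_phi (q^4) * (2 * ram_psi (q^120)))))
     {(x,y). x mod 2 = 1 \<and> y mod 2 = 1 \<and> (x-y) mod 16 = 8}"
proof (rule term_sum[where f="\<lambda>a. (q^4) ^ nat (a^2)" and g="\<lambda>b. (q^120) ^ nat (T b)"
      and j="\<lambda>(a,b). (2*a+5*(2*b+1), 2*a-3*(2*b+1))" and i="\<lambda>(x,y). ((y+3*((x-y) div 8)) div 2, (x-y-8) div 16)"])
  have n: "norm (q^k) < 1" if "k > 0" for k using assms that by (simp add: norm_power power_less_one_iff)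
  show "((\<lambda>a. (q^4) ^ nat (a^2)) has_sum ram_phi (q^4)) UNIV" "(\<lambda>a. norm ((q^4) ^ nat (a^2))) summable_on UNIV"
    using phi_Z[OF n[of 4]] by auto
  show "((\<lambda>b. (q^120) ^ nat (T b)) has_sum 2 * ram_psi (q^120)) UNIV" "(\<lambda>b. norm ((q^120) ^ nat (T b))) summable_on UNIV"
    using psi_Z[OF n[of 120]] by auto
  show "(\<lambda>(x,y). ((y+3*((x-y) div 8)) div 2, (x-y-8) div 16)) ((\<lambda>(a,b). (2*a+5*(2*b+1), 2*a-3*(2*b+1))) (a, b)) = (a, b)" for a b :: int
    by (simp; presburger)
  show "(\<lambda>(a,b). (2*a+5*(2*b+1), 2*a-3*(2*b+1))) ((\<lambda>(x,y). ((y+3*((x-y) div 8)) div 2, (x-y-8) div 16)) p) = p"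
    if "p \<in> {(x,y). x mod 2 = 1 \<and> y mod 2 = 1 \<and> (x-y) mod 16 = 8}" for p :: "int \<times> int"
  proof -
    obtain x y where p: "p = (x,y)" by (cases p)
    have c: "x mod 2 = 1" "y mod 2 = 1" "(x-y) mod 16 = 8" using that p by auto
    have um: "(x-y) mod 8 = 0" using c by presburger
    have u: "x-y = 8 * ((x-y) div 8)" using um mult_div_mod_eq[of 8 "x-y"] by linarith
    have bm: "(x-y-8) mod 16 = 0" using c by presburger
    have b: "x-y-8 = 16 * ((x-y-8) div 16)" using bm mult_div_mod_eq[of 16 "x-y-8"] by linarith
    have mm: "(y+3*((x-y) div 8)) mod 2 = 0" by (rule ev2[OF c(2), where B="(x-y-8) div 16"]) (use u b in linarith)
    have m: "y+3*((x-y) div 8) = 2 * ((y+3*((x-y) div 8)) div 2)" using mm mult_div_mod_eq[of 2 "y+3*((x-y) div 8)"] by linarith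
    have f: "2 * ((y+3*((x-y) div 8)) div 2) + 5 * (2 * ((x-y-8) div 16) + 1) = x" "2 * ((y+3*((x-y) div 8)) div 2) - 3 * (2 * ((x-y-8) div 16) + 1) = y" using inv_A2[OF u b m] by auto
    show ?thesis unfolding p using f by simp
  qed
  show "(\<lambda>(a,b). (2*a+5*(2*b+1), 2*a-3*(2*b+1))) (a, b) \<in> {(x,y). x mod 2 = 1 \<and> y mod 2 = 1 \<and> (x-y) mod 16 = 8}" for a b :: int
    by (simp; presburger)
  show "h1 q ((\<lambda>(a,b). (2*a+5*(2*b+1), 2*a-3*(2*b+1))) (a, b)) = q^14 * ((q^4) ^ nat (a^2) * (q^120) ^ nat (T b))" for a b :: int
  proof -
    have "3*(2*a+5*(2*b+1))^2+5*(2*a-3*(2*b+1))^2 = 8*(int 14 + int 4 * (a^2) + int 120 * T b) + 8"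
      using T2[of a] T2[of b] by simp algebra
    from h1_eq[OF this] have "h1 q (2*a+5*(2*b+1), 2*a-3*(2*b+1)) = q ^ nat (int 14 + int 4 * (a^2) + int 120 * T b)"
      by (simp add: T_nonneg)
    also have "\<dots> = q^14 * ((q^4) ^ nat (a^2) * (q^120) ^ nat (T b))"
      by (rule powK) (auto simp: T_nonneg)
    finally show ?thesis by simp
  qed
qed

lemma t1_B4:
  fixes q :: complex
  assumes "norm q < 1"
  shows "(h1 q has_sum (q^5 * (ram_phi (q^40) * (2 * ram_psi (q^48)))))
     {(x,y). x mod 8 = 4 \<and> y mod 8 = 0}"
proof (rule term_sum[where f="\<lambda>a. (q^40) ^ nat (a^2)" and g="\<lambda>b. (q^48) ^ nat (T b)"
      and j="\<lambda>(a,b). (4*(2*b+1), 8*a)" and i="\<lambda>(x,y). (y div 8, (x-4) div 8)"])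
  have n: "norm (q^k) < 1" if "k > 0" for k using assms that by (simp add: norm_power power_less_one_iff)
  show "((\<lambda>a. (q^40) ^ nat (a^2)) has_sum ram_phi (q^40)) UNIV" "(\<lambda>a. norm ((q^40) ^ nat (a^2))) summable_on UNIV"
    using phi_Z[OF n[of 40]] by auto
  show "((\<lambda>b. (q^48) ^ nat (T b)) has_sum 2 * ram_psi (q^48)) UNIV" "(\<lambda>b. norm ((q^48) ^ nat (T b))) summable_on UNIV"
    using psi_Z[OF n[of 48]] by auto
  show "(\<lambda>(x,y). (y div 8, (x-4) div 8)) ((\<lambda>(a,b). (4*(2*b+1), 8*a)) (a, b)) = (a, b)" for a b :: int
    by (simp; presburger)
  show "(\<lambda>(a,b). (4*(2*b+1), 8*a)) ((\<lambda>(x,y). (y div 8, (x-4) div 8)) p) = p"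
    if "p \<in> {(x,y). x mod 8 = 4 \<and> y mod 8 = 0}" for p :: "int \<times> int"
    using that by (cases p) (simp; presburger)
  show "(\<lambda>(a,b). (4*(2*b+1), 8*a)) (a, b) \<in> {(x,y). x mod 8 = 4 \<and> y mod 8 = 0}" for a b :: int
    by (simp; presburger)
  show "h1 q ((\<lambda>(a,b). (4*(2*b+1), 8*a)) (a, b)) = q^5 * ((q^40) ^ nat (a^2) * (q^48) ^ nat (T b))" for a b :: int
  proof -
    have "3*(4*(2*b+1))^2+5*(8*a)^2 = 8*(int 5 + int 40 * (a^2) + int 48 * T b) + 8"
      using T2[of a] T2[of b] by simp algebra
    from h1_eq[OF this] have "h1 q (4*(2*b+1), 8*a) = q ^ nat (int 5 + int 40 * (a^2) + int 48 * T b)"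
      by (simp add: T_nonneg)
    also have "\<dots> = q^5 * ((q^40) ^ nat (a^2) * (q^48) ^ nat (T b))"
      by (rule powK) (auto simp: T_nonneg)
    finally show ?thesis by simp
  qed
qed

lemma t1_B5:
  fixes q :: complex
  assumes "norm q < 1"
  shows "(h1 q has_sum (q^9 * (ram_phi (q^24) * (2 * ram_psi (q^80)))))
     {(x,y). x mod 8 = 0 \<and> y mod 8 = 4}"
proof (rule term_sum[where f="\<lambda>a. (q^24) ^ nat (a^2)" and g="\<lambda>b. (q^80) ^ nat (T b)"
      and j="\<lambda>(a,b). (8*a, 4*(2*b+1))" and i="\<lambda>(x,y). (x div 8, (y-4) div 8)"])
  have n: "norm (q^k) < 1" if "k > 0" for k using assms that by (simp add: norm_power power_less_one_iff)
  show "((\<lambda>a. (q^24) ^ nat (a^2)) has_sum ram_phi (q^24)) UNIV" "(\<lambda>a. norm ((q^24) ^ nat (a^2))) summable_on UNIV"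
    using phi_Z[OF n[of 24]] by auto
  show "((\<lambda>b. (q^80) ^ nat (T b)) has_sum 2 * ram_psi (q^80)) UNIV" "(\<lambda>b. norm ((q^80) ^ nat (T b))) summable_on UNIV"
    using psi_Z[OF n[of 80]] by auto
  show "(\<lambda>(x,y). (x div 8, (y-4) div 8)) ((\<lambda>(a,b). (8*a, 4*(2*b+1))) (a, b)) = (a, b)" for a b :: int
    by (simp; presburger)
  show "(\<lambda>(a,b). (8*a, 4*(2*b+1))) ((\<lambda>(x,y). (x div 8, (y-4) div 8)) p) = p"
    if "p \<in> {(x,y). x mod 8 = 0 \<and> y mod 8 = 4}" for p :: "int \<times> int"
    using that by (cases p) (simp; presburger)
  show "(\<lambda>(a,b). (8*a, 4*(2*b+1))) (a, b) \<in> {(x,y). x mod 8 = 0 \<and> y mod 8 = 4}" for a b :: int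
    by (simp; presburger)
  show "h1 q ((\<lambda>(a,b). (8*a, 4*(2*b+1))) (a, b)) = q^9 * ((q^24) ^ nat (a^2) * (q^80) ^ nat (T b))" for a b :: int
  proof -
    have "3*(8*a)^2+5*(4*(2*b+1))^2 = 8*(int 9 + int 24 * (a^2) + int 80 * T b) + 8"
      using T2[of a] T2[of b] by simp algebra
    from h1_eq[OF this] have "h1 q (8*a, 4*(2*b+1)) = q ^ nat (int 9 + int 24 * (a^2) + int 80 * T b)"
      by (simp add: T_nonneg)
    also have "\<dots> = q^9 * ((q^24) ^ nat (a^2) * (q^80) ^ nat (T b))"
      by (rule powK) (auto simp: T_nonneg)
    finally show ?thesis by simp
  qed
qed

lemma t1_C3:
  fixes q :: complex
  assumes "norm q < 1"
  shows "(h1 q has_sum (q^3 * ((2 * ram_psi (q^12)) * (2 * ram_psi (q^20)))))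
     {(x,y). x mod 4 = 2 \<and> y mod 4 = 2}"
proof (rule term_sum[where f="\<lambda>a. (q^12) ^ nat (T a)" and g="\<lambda>b. (q^20) ^ nat (T b)"
      and j="\<lambda>(a,b). (2*(2*a+1), 2*(2*b+1))" and i="\<lambda>(x,y). ((x-2) div 4, (y-2) div 4)"])
  have n: "norm (q^k) < 1" if "k > 0" for k using assms that by (simp add: norm_power power_less_one_iff)
  show "((\<lambda>a. (q^12) ^ nat (T a)) has_sum (2 * ram_psi (q^12))) UNIV" "(\<lambda>a. norm ((q^12) ^ nat (T a))) summable_on UNIV"
    using psi_Z[OF n[of 12]] by auto
  show "((\<lambda>b. (q^20) ^ nat (T b)) has_sum 2 * ram_psi (q^20)) UNIV" "(\<lambda>b. norm ((q^20) ^ nat (T b))) summable_on UNIV"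
    using psi_Z[OF n[of 20]] by auto
  show "(\<lambda>(x,y). ((x-2) div 4, (y-2) div 4)) ((\<lambda>(a,b). (2*(2*a+1), 2*(2*b+1))) (a, b)) = (a, b)" for a b :: int
    by (simp; presburger)
  show "(\<lambda>(a,b). (2*(2*a+1), 2*(2*b+1))) ((\<lambda>(x,y). ((x-2) div 4, (y-2) div 4)) p) = p"
    if "p \<in> {(x,y). x mod 4 = 2 \<and> y mod 4 = 2}" for p :: "int \<times> int"
    using that by (cases p) (simp; presburger)
  show "(\<lambda>(a,b). (2*(2*a+1), 2*(2*b+1))) (a, b) \<in> {(x,y). x mod 4 = 2 \<and> y mod 4 = 2}" for a b :: int
    by (simp; presburger)
  show "h1 q ((\<lambda>(a,b). (2*(2*a+1), 2*(2*b+1))) (a, b)) = q^3 * ((q^12) ^ nat (T a) * (q^20) ^ nat (T b))" for a b :: int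
  proof -
    have "3*(2*(2*a+1))^2+5*(2*(2*b+1))^2 = 8*(int 3 + int 12 * (T a) + int 20 * T b) + 8"
      using T2[of a] T2[of b] by simp algebra
    from h1_eq[OF this] have "h1 q (2*(2*a+1), 2*(2*b+1)) = q ^ nat (int 3 + int 12 * (T a) + int 20 * T b)"
      by (simp add: T_nonneg)
    also have "\<dots> = q^3 * ((q^12) ^ nat (T a) * (q^20) ^ nat (T b))"
      by (rule powK) (auto simp: T_nonneg)
    finally show ?thesis by simp
  qed
qed

lemma t2_O:
  fixes q :: complex
  assumes "norm q < 1"
  shows "(h2 q has_sum (q^0 * ((2 * ram_psi (q^1)) * (2 * ram_psi (q^15)))))
     {(x,y). x mod 2 = 1 \<and> y mod 2 = 1}"
proof (rule term_sum[where f="\<lambda>a. (q^1) ^ nat (T a)" and g="\<lambda>b. (q^15) ^ nat (T b)"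
      and j="\<lambda>(a,b). (2*a+1, 2*b+1)" and i="\<lambda>(x,y). (x div 2, y div 2)"])
  have n: "norm (q^k) < 1" if "k > 0" for k using assms that by (simp add: norm_power power_less_one_iff)
  show "((\<lambda>a. (q^1) ^ nat (T a)) has_sum (2 * ram_psi (q^1))) UNIV" "(\<lambda>a. norm ((q^1) ^ nat (T a))) summable_on UNIV"
    using psi_Z[OF n[of 1]] by auto
  show "((\<lambda>b. (q^15) ^ nat (T b)) has_sum 2 * ram_psi (q^15)) UNIV" "(\<lambda>b. norm ((q^15) ^ nat (T b))) summable_on UNIV"
    using psi_Z[OF n[of 15]] by auto
  show "(\<lambda>(x,y). (x div 2, y div 2)) ((\<lambda>(a,b). (2*a+1, 2*b+1)) (a, b)) = (a, b)" for a b :: int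
    by (simp; presburger)
  show "(\<lambda>(a,b). (2*a+1, 2*b+1)) ((\<lambda>(x,y). (x div 2, y div 2)) p) = p"
    if "p \<in> {(x,y). x mod 2 = 1 \<and> y mod 2 = 1}" for p :: "int \<times> int"
    using that by (cases p) (simp; presburger)
  show "(\<lambda>(a,b). (2*a+1, 2*b+1)) (a, b) \<in> {(x,y). x mod 2 = 1 \<and> y mod 2 = 1}" for a b :: int
    by (simp; presburger)
  show "h2 q ((\<lambda>(a,b). (2*a+1, 2*b+1)) (a, b)) = q^0 * ((q^1) ^ nat (T a) * (q^15) ^ nat (T b))" for a b :: int
  proof -
    have "(2*a+1)^2+15*(2*b+1)^2 = 8*(int 0 + int 1 * (T a) + int 15 * T b) + 16"
      using T2[of a] T2[of b] by simp algebra
    from h2_eq[OF this] have "h2 q (2*a+1, 2*b+1) = q ^ nat (int 0 + int 1 * (T a) + int 15 * T b)"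
      by (simp add: T_nonneg)
    also have "\<dots> = q^0 * ((q^1) ^ nat (T a) * (q^15) ^ nat (T b))"
      by (rule powK) (auto simp: T_nonneg)
    finally show ?thesis by simp
  qed
qed

lemma t2_K1:
  fixes q :: complex
  assumes "norm q < 1"
  shows "(h2 q has_sum (q^0 * (ram_phi (q^120) * (2 * ram_psi (q^16)))))
     {(x,y). x mod 8 = 4 \<and> y mod 8 = 0}"
proof (rule term_sum[where f="\<lambda>a. (q^120) ^ nat (a^2)" and g="\<lambda>b. (q^16) ^ nat (T b)"
      and j="\<lambda>(a,b). (4*(2*b+1), 8*a)" and i="\<lambda>(x,y). (y div 8, (x-4) div 8)"])
  have n: "norm (q^k) < 1" if "k > 0" for k using assms that by (simp add: norm_power power_less_one_iff)
  show "((\<lambda>a. (q^120) ^ nat (a^2)) has_sum ram_phi (q^120)) UNIV" "(\<lambda>a. norm ((q^120) ^ nat (a^2))) summable_on UNIV"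
    using phi_Z[OF n[of 120]] by auto
  show "((\<lambda>b. (q^16) ^ nat (T b)) has_sum 2 * ram_psi (q^16)) UNIV" "(\<lambda>b. norm ((q^16) ^ nat (T b))) summable_on UNIV"
    using psi_Z[OF n[of 16]] by auto
  show "(\<lambda>(x,y). (y div 8, (x-4) div 8)) ((\<lambda>(a,b). (4*(2*b+1), 8*a)) (a, b)) = (a, b)" for a b :: int
    by (simp; presburger)
  show "(\<lambda>(a,b). (4*(2*b+1), 8*a)) ((\<lambda>(x,y). (y div 8, (x-4) div 8)) p) = p"
    if "p \<in> {(x,y). x mod 8 = 4 \<and> y mod 8 = 0}" for p :: "int \<times> int"
    using that by (cases p) (simp; presburger)
  show "(\<lambda>(a,b). (4*(2*b+1), 8*a)) (a, b) \<in> {(x,y). x mod 8 = 4 \<and> y mod 8 = 0}" for a b :: int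
    by (simp; presburger)
  show "h2 q ((\<lambda>(a,b). (4*(2*b+1), 8*a)) (a, b)) = q^0 * ((q^120) ^ nat (a^2) * (q^16) ^ nat (T b))" for a b :: int
  proof -
    have "(4*(2*b+1))^2+15*(8*a)^2 = 8*(int 0 + int 120 * (a^2) + int 16 * T b) + 16"
      using T2[of a] T2[of b] by simp algebra
    from h2_eq[OF this] have "h2 q (4*(2*b+1), 8*a) = q ^ nat (int 0 + int 120 * (a^2) + int 16 * T b)"
      by (simp add: T_nonneg)
    also have "\<dots> = q^0 * ((q^120) ^ nat (a^2) * (q^16) ^ nat (T b))"
      by (rule powK) (auto simp: T_nonneg)
    finally show ?thesis by simp
  qed
qed

lemma t2_K2:
  fixes q :: complex
  assumes "norm q < 1"
  shows "(h2 q has_sum (q^28 * (ram_phi (q^8) * (2 * ram_psi (q^240)))))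
     {(x,y). x mod 8 = 0 \<and> y mod 8 = 4}"
proof (rule term_sum[where f="\<lambda>a. (q^8) ^ nat (a^2)" and g="\<lambda>b. (q^240) ^ nat (T b)"
      and j="\<lambda>(a,b). (8*a, 4*(2*b+1))" and i="\<lambda>(x,y). (x div 8, (y-4) div 8)"])
  have n: "norm (q^k) < 1" if "k > 0" for k using assms that by (simp add: norm_power power_less_one_iff)
  show "((\<lambda>a. (q^8) ^ nat (a^2)) has_sum ram_phi (q^8)) UNIV" "(\<lambda>a. norm ((q^8) ^ nat (a^2))) summable_on UNIV"
    using phi_Z[OF n[of 8]] by auto
  show "((\<lambda>b. (q^240) ^ nat (T b)) has_sum 2 * ram_psi (q^240)) UNIV" "(\<lambda>b. norm ((q^240) ^ nat (T b))) summable_on UNIV"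
    using psi_Z[OF n[of 240]] by auto
  show "(\<lambda>(x,y). (x div 8, (y-4) div 8)) ((\<lambda>(a,b). (8*a, 4*(2*b+1))) (a, b)) = (a, b)" for a b :: int
    by (simp; presburger)
  show "(\<lambda>(a,b). (8*a, 4*(2*b+1))) ((\<lambda>(x,y). (x div 8, (y-4) div 8)) p) = p"
    if "p \<in> {(x,y). x mod 8 = 0 \<and> y mod 8 = 4}" for p :: "int \<times> int"
    using that by (cases p) (simp; presburger)
  show "(\<lambda>(a,b). (8*a, 4*(2*b+1))) (a, b) \<in> {(x,y). x mod 8 = 0 \<and> y mod 8 = 4}" for a b :: int
    by (simp; presburger)
  show "h2 q ((\<lambda>(a,b). (8*a, 4*(2*b+1))) (a, b)) = q^28 * ((q^8) ^ nat (a^2) * (q^240) ^ nat (T b))" for a b :: int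
  proof -
    have "(8*a)^2+15*(4*(2*b+1))^2 = 8*(int 28 + int 8 * (a^2) + int 240 * T b) + 16"
      using T2[of a] T2[of b] by simp algebra
    from h2_eq[OF this] have "h2 q (8*a, 4*(2*b+1)) = q ^ nat (int 28 + int 8 * (a^2) + int 240 * T b)"
      by (simp add: T_nonneg)
    also have "\<dots> = q^28 * ((q^8) ^ nat (a^2) * (q^240) ^ nat (T b))"
      by (rule powK) (auto simp: T_nonneg)
    finally show ?thesis by simp
  qed
qed

lemma t2_K3:
  fixes q :: complex
  assumes "norm q < 1"
  shows "(h2 q has_sum (q^6 * ((2 * ram_psi (q^4)) * (2 * ram_psi (q^60)))))
     {(x,y). x mod 4 = 2 \<and> y mod 4 = 2}"
proof (rule term_sum[where f="\<lambda>a. (q^4) ^ nat (T a)" and g="\<lambda>b. (q^60) ^ nat (T b)"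
      and j="\<lambda>(a,b). (2*(2*a+1), 2*(2*b+1))" and i="\<lambda>(x,y). ((x-2) div 4, (y-2) div 4)"])
  have n: "norm (q^k) < 1" if "k > 0" for k using assms that by (simp add: norm_power power_less_one_iff)
  show "((\<lambda>a. (q^4) ^ nat (T a)) has_sum (2 * ram_psi (q^4))) UNIV" "(\<lambda>a. norm ((q^4) ^ nat (T a))) summable_on UNIV"
    using psi_Z[OF n[of 4]] by auto
  show "((\<lambda>b. (q^60) ^ nat (T b)) has_sum 2 * ram_psi (q^60)) UNIV" "(\<lambda>b. norm ((q^60) ^ nat (T b))) summable_on UNIV"
    using psi_Z[OF n[of 60]] by auto
  show "(\<lambda>(x,y). ((x-2) div 4, (y-2) div 4)) ((\<lambda>(a,b). (2*(2*a+1), 2*(2*b+1))) (a, b)) = (a, b)" for a b :: int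
    by (simp; presburger)
  show "(\<lambda>(a,b). (2*(2*a+1), 2*(2*b+1))) ((\<lambda>(x,y). ((x-2) div 4, (y-2) div 4)) p) = p"
    if "p \<in> {(x,y). x mod 4 = 2 \<and> y mod 4 = 2}" for p :: "int \<times> int"
    using that by (cases p) (simp; presburger)
  show "(\<lambda>(a,b). (2*(2*a+1), 2*(2*b+1))) (a, b) \<in> {(x,y). x mod 4 = 2 \<and> y mod 4 = 2}" for a b :: int
    by (simp; presburger)
  show "h2 q ((\<lambda>(a,b). (2*(2*a+1), 2*(2*b+1))) (a, b)) = q^6 * ((q^4) ^ nat (T a) * (q^60) ^ nat (T b))" for a b :: int
  proof -
    have "(2*(2*a+1))^2+15*(2*(2*b+1))^2 = 8*(int 6 + int 4 * (T a) + int 60 * T b) + 16"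
      using T2[of a] T2[of b] by simp algebra
    from h2_eq[OF this] have "h2 q (2*(2*a+1), 2*(2*b+1)) = q ^ nat (int 6 + int 4 * (T a) + int 60 * T b)"
      by (simp add: T_nonneg)
    also have "\<dots> = q^6 * ((q^4) ^ nat (T a) * (q^60) ^ nat (T b))"
      by (rule powK) (auto simp: T_nonneg)
    finally show ?thesis by simp
  qed
qed

lemma t2_K4:
  fixes q :: complex
  assumes "norm q < 1"
  shows "(h2 q has_sum (q^1 * (ram_phi (q^20) * (2 * ram_psi (q^24)))))
     {(x,y). x mod 2 = 1 \<and> y mod 2 = 1 \<and> (x-3*y) mod 16 = 0}"
proof (rule term_sum[where f="\<lambda>a. (q^20) ^ nat (a^2)" and g="\<lambda>b. (q^24) ^ nat (T b)"
      and j="\<lambda>(a,b). (3*(2*b+1)+10*a, (2*b+1)-2*a)" and i="\<lambda>(x,y). ((x-3*y) div 16, (y + 2*((x-3*y) div 16) - 1) div 2)"])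
  have n: "norm (q^k) < 1" if "k > 0" for k using assms that by (simp add: norm_power power_less_one_iff)
  show "((\<lambda>a. (q^20) ^ nat (a^2)) has_sum ram_phi (q^20)) UNIV" "(\<lambda>a. norm ((q^20) ^ nat (a^2))) summable_on UNIV"
    using phi_Z[OF n[of 20]] by auto
  show "((\<lambda>b. (q^24) ^ nat (T b)) has_sum 2 * ram_psi (q^24)) UNIV" "(\<lambda>b. norm ((q^24) ^ nat (T b))) summable_on UNIV"
    using psi_Z[OF n[of 24]] by auto
  show "(\<lambda>(x,y). ((x-3*y) div 16, (y + 2*((x-3*y) div 16) - 1) div 2)) ((\<lambda>(a,b). (3*(2*b+1)+10*a, (2*b+1)-2*a)) (a, b)) = (a, b)" for a b :: int
    by (simp; presburger)
  show "(\<lambda>(a,b). (3*(2*b+1)+10*a, (2*b+1)-2*a)) ((\<lambda>(x,y). ((x-3*y) div 16, (y + 2*((x-3*y) div 16) - 1) div 2)) p) = p"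
    if "p \<in> {(x,y). x mod 2 = 1 \<and> y mod 2 = 1 \<and> (x-3*y) mod 16 = 0}" for p :: "int \<times> int"
  proof -
    obtain x y where p: "p = (x,y)" by (cases p)
    have c: "x mod 2 = 1" "y mod 2 = 1" "(x-3*y) mod 16 = 0" using that p by auto
    have km: "(x-3*y) mod 16 = 0" using c by simp
    have k: "x-3*y = 16 * ((x-3*y) div 16)" using km mult_div_mod_eq[of 16 "x-3*y"] by linarith
    have mm: "(y + 2*((x-3*y) div 16) - 1) mod 2 = 0" using ev1[OF c(2), of "(x-3*y) div 16"] by simp
    have m: "y + 2*((x-3*y) div 16) - 1 = 2 * ((y + 2*((x-3*y) div 16) - 1) div 2)" using mm mult_div_mod_eq[of 2 "y + 2*((x-3*y) div 16) - 1"] by linarith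
    have f: "3 * (2 * ((y + 2*((x-3*y) div 16) - 1) div 2) + 1) + 10 * ((x-3*y) div 16) = x" "(2 * ((y + 2*((x-3*y) div 16) - 1) div 2) + 1) - 2 * ((x-3*y) div 16) = y" using inv_K4[OF k m] by auto
    show ?thesis unfolding p using f by simp
  qed
  show "(\<lambda>(a,b). (3*(2*b+1)+10*a, (2*b+1)-2*a)) (a, b) \<in> {(x,y). x mod 2 = 1 \<and> y mod 2 = 1 \<and> (x-3*y) mod 16 = 0}" for a b :: int
    by (simp; presburger)
  show "h2 q ((\<lambda>(a,b). (3*(2*b+1)+10*a, (2*b+1)-2*a)) (a, b)) = q^1 * ((q^20) ^ nat (a^2) * (q^24) ^ nat (T b))" for a b :: int
  proof -
    have "(3*(2*b+1)+10*a)^2+15*((2*b+1)-2*a)^2 = 8*(int 1 + int 20 * (a^2) + int 24 * T b) + 16"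
      using T2[of a] T2[of b] by simp algebra
    from h2_eq[OF this] have "h2 q (3*(2*b+1)+10*a, (2*b+1)-2*a) = q ^ nat (int 1 + int 20 * (a^2) + int 24 * T b)"
      by (simp add: T_nonneg)
    also have "\<dots> = q^1 * ((q^20) ^ nat (a^2) * (q^24) ^ nat (T b))"
      by (rule powK) (auto simp: T_nonneg)
    finally show ?thesis by simp
  qed
qed

lemma t2_K5:
  fixes q :: complex
  assumes "norm q < 1"
  shows "(h2 q has_sum (q^3 * (ram_phi (q^12) * (2 * ram_psi (q^40)))))
     {(x,y). x mod 2 = 1 \<and> y mod 2 = 1 \<and> (x-3*y) mod 16 = 8}"
proof (rule term_sum[where f="\<lambda>a. (q^12) ^ nat (a^2)" and g="\<lambda>b. (q^40) ^ nat (T b)"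
      and j="\<lambda>(a,b). (6*a+5*(2*b+1), 2*a-(2*b+1))" and i="\<lambda>(x,y). ((y+(x-3*y) div 8) div 2, (x-3*y-8) div 16)"])
  have n: "norm (q^k) < 1" if "k > 0" for k using assms that by (simp add: norm_power power_less_one_iff)
  show "((\<lambda>a. (q^12) ^ nat (a^2)) has_sum ram_phi (q^12)) UNIV" "(\<lambda>a. norm ((q^12) ^ nat (a^2))) summable_on UNIV"
    using phi_Z[OF n[of 12]] by auto
  show "((\<lambda>b. (q^40) ^ nat (T b)) has_sum 2 * ram_psi (q^40)) UNIV" "(\<lambda>b. norm ((q^40) ^ nat (T b))) summable_on UNIV"
    using psi_Z[OF n[of 40]] by auto
  show "(\<lambda>(x,y). ((y+(x-3*y) div 8) div 2, (x-3*y-8) div 16)) ((\<lambda>(a,b). (6*a+5*(2*b+1), 2*a-(2*b+1))) (a, b)) = (a, b)" for a b :: int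
    by (simp; presburger)
  show "(\<lambda>(a,b). (6*a+5*(2*b+1), 2*a-(2*b+1))) ((\<lambda>(x,y). ((y+(x-3*y) div 8) div 2, (x-3*y-8) div 16)) p) = p"
    if "p \<in> {(x,y). x mod 2 = 1 \<and> y mod 2 = 1 \<and> (x-3*y) mod 16 = 8}" for p :: "int \<times> int"
  proof -
    obtain x y where p: "p = (x,y)" by (cases p)
    have c: "x mod 2 = 1" "y mod 2 = 1" "(x-3*y) mod 16 = 8" using that p by auto
    have um: "(x-3*y) mod 8 = 0" using c by presburger
    have u: "x-3*y = 8 * ((x-3*y) div 8)" using um mult_div_mod_eq[of 8 "x-3*y"] by linarith
    have bm: "(x-3*y-8) mod 16 = 0" using c by presburger
    have b: "x-3*y-8 = 16 * ((x-3*y-8) div 16)" using bm mult_div_mod_eq[of 16 "x-3*y-8"] by linarith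
    have mm: "(y+(x-3*y) div 8) mod 2 = 0" by (rule ev3[OF c(2), where B="(x-3*y-8) div 16"]) (use u b in linarith)
    have m: "y+(x-3*y) div 8 = 2 * ((y+(x-3*y) div 8) div 2)" using mm mult_div_mod_eq[of 2 "y+(x-3*y) div 8"] by linarith
    have f: "6 * ((y+(x-3*y) div 8) div 2) + 5 * (2 * ((x-3*y-8) div 16) + 1) = x" "2 * ((y+(x-3*y) div 8) div 2) - (2 * ((x-3*y-8) div 16) + 1) = y" using inv_K5[OF u b m] by auto
    show ?thesis unfolding p using f by simp
  qed
  show "(\<lambda>(a,b). (6*a+5*(2*b+1), 2*a-(2*b+1))) (a, b) \<in> {(x,y). x mod 2 = 1 \<and> y mod 2 = 1 \<and> (x-3*y) mod 16 = 8}" for a b :: int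
    by (simp; presburger)
  show "h2 q ((\<lambda>(a,b). (6*a+5*(2*b+1), 2*a-(2*b+1))) (a, b)) = q^3 * ((q^12) ^ nat (a^2) * (q^40) ^ nat (T b))" for a b :: int
  proof -
    have "(6*a+5*(2*b+1))^2+15*(2*a-(2*b+1))^2 = 8*(int 3 + int 12 * (a^2) + int 40 * T b) + 16"
      using T2[of a] T2[of b] by simp algebra
    from h2_eq[OF this] have "h2 q (6*a+5*(2*b+1), 2*a-(2*b+1)) = q ^ nat (int 3 + int 12 * (a^2) + int 40 * T b)"
      by (simp add: T_nonneg)
    also have "\<dots> = q^3 * ((q^12) ^ nat (a^2) * (q^40) ^ nat (T b))"
      by (rule powK) (auto simp: T_nonneg)
    finally show ?thesis by simp
  qed
qed



lemma refl_double:
  fixes h :: "int\<times>int \<Rightarrow> complex"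
  assumes s: "(h has_sum sv) A" and hs: "\<And>x y. h (-x,y) = h (x,y)"
    and AB: "\<And>x y. (x,y) \<in> A \<Longrightarrow> (-x,y) \<in> B" and BA: "\<And>x y. (x,y) \<in> B \<Longrightarrow> (-x,y) \<in> A"
    and d: "A \<inter> B = {}"
  shows "(h has_sum (2 * sv)) (A \<union> B)"
proof -
  have "(h has_sum sv) A = (h has_sum sv) B"
    by (rule has_sum_reindex_bij_witness[where i="\<lambda>(x,y). (-x,y)" and j="\<lambda>(x,y). (-x,y)"])
       (use AB BA hs in auto)
  with s have "(h has_sum sv) B" by simp
  from has_sum_Un_disjoint[OF s this d] show ?thesis by (simp only: mult_2)
qed

lemma refl_half:
  fixes h :: "int\<times>int \<Rightarrow> complex"
  assumes s: "(h has_sum sv) (A \<union> B)" and hs: "\<And>x y. h (-x,y) = h (x,y)"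
    and AB: "\<And>x y. (x,y) \<in> A \<Longrightarrow> (-x,y) \<in> B" and BA: "\<And>x y. (x,y) \<in> B \<Longrightarrow> (-x,y) \<in> A"
    and d: "A \<inter> B = {}"
  shows "(h has_sum (sv/2)) A"
proof -
  have "h summable_on A"
    by (rule summable_on_subset_banach[OF has_sum_imp_summable[OF s]]) auto
  then have a: "(h has_sum infsum h A) A" by (simp add: summable_iff_has_sum_infsum)
  have "(h has_sum (2 * infsum h A)) (A \<union> B)" by (rule refl_double[OF a hs AB BA d])
  with s have "sv = 2 * infsum h A" using has_sum_unique by blast
  with a show ?thesis by simp
qed

lemma h1_neg: "h1 q (-x,y) = h1 q (x,y)" unfolding h1_def by simp
lemma h2_neg: "h2 q (-x,y) = h2 q (x,y)" unfolding h2_def by simp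

lemma rho1:
  fixes x y a b :: int
  assumes "4*a = -x+5*y" "4*b = 3*x+y"
  shows "(-a+5*b) div 4 = x" "(3*a+b) div 4 = y" "h1 q (a,b) = h1 q (x,y)"
proof -
  have "-a+5*b = 4*x" using assms by linarith
  then show "(-a+5*b) div 4 = x" by simp
  have "3*a+b = 4*y" using assms by linarith
  then show "(3*a+b) div 4 = y" by simp
  have e1: "16*a^2 = x^2 - 10*(x*y) + 25*y^2"
  proof -
    have "16*a^2 = (4*a)^2" by (simp add: power2_eq_square)
    also have "\<dots> = (-x+5*y)^2" using assms by simp
    finally show ?thesis by (simp add: power2_eq_square algebra_simps)
  qed
  have e2: "16*b^2 = 9*x^2 + 6*(x*y) + y^2"
  proof -
    have "16*b^2 = (4*b)^2" by (simp add: power2_eq_square)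
    also have "\<dots> = (3*x+y)^2" using assms by simp
    finally show ?thesis by (simp add: power2_eq_square algebra_simps)
  qed
  have "3*a^2+5*b^2 = 3*x^2+5*y^2" using e1 e2 by linarith
  then show "h1 q (a,b) = h1 q (x,y)" unfolding h1_def by simp
qed

lemma rho2:
  fixes x y a b :: int
  assumes "4*a = x-15*y" "4*b = x+y"
  shows "(a+15*b) div 4 = x" "(b-a) div 4 = y" "h2 q (a,b) = h2 q (x,y)"
proof -
  have "a+15*b = 4*x" using assms by linarith
  then show "(a+15*b) div 4 = x" by simp
  have "b-a = 4*y" using assms by linarith
  then show "(b-a) div 4 = y" by simp
  have e1: "16*a^2 = x^2 - 30*(x*y) + 225*y^2"
  proof -
    have "16*a^2 = (4*a)^2" by (simp add: power2_eq_square)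
    also have "\<dots> = (x-15*y)^2" using assms by simp
    finally show ?thesis by (simp add: power2_eq_square algebra_simps)
  qed
  have e2: "16*b^2 = x^2 + 2*(x*y) + y^2"
  proof -
    have "16*b^2 = (4*b)^2" by (simp add: power2_eq_square)
    also have "\<dots> = (x+y)^2" using assms by simp
    finally show ?thesis by (simp add: power2_eq_square algebra_simps)
  qed
  have "a^2+15*b^2 = x^2+15*y^2" using e1 e2 by linarith
  then show "h2 q (a,b) = h2 q (x,y)" unfolding h2_def by simp
qed

lemma rho2':
  fixes x y a b :: int
  assumes "4*a = x+15*y" "4*b = y-x"
  shows "(a-15*b) div 4 = x" "(a+b) div 4 = y"
proof -
  have "a-15*b = 4*x" using assms by linarith
  then show "(a-15*b) div 4 = x" by simp
  have "a+b = 4*y" using assms by linarith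
  then show "(a+b) div 4 = y" by simp
qed

lemma invol_sum:
  fixes h :: "int\<times>int \<Rightarrow> complex"
  assumes s: "(h has_sum v) U"
    and f: "\<And>x y. (x,y) \<in> U \<Longrightarrow> j (x,y) \<in> S \<and> i (j (x,y)) = (x,y) \<and> h (j (x,y)) = h (x,y)"
    and b: "\<And>x y. (x,y) \<in> S \<Longrightarrow> i (x,y) \<in> U \<and> j (i (x,y)) = (x,y)"
  shows "(h has_sum v) S"
proof -
  have "(h has_sum v) U = (h has_sum v) S"
    by (rule has_sum_reindex_bij_witness[where i=i and j=j]) (use f b in auto)
  with s show ?thesis by simp
qed

lemma md4: "(e::int) mod 4 = 0 \<Longrightarrow> 4 * (e div 4) = e"
  using mult_div_mod_eq[of 4 e] by simp

lemma rho1':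
  fixes x y :: int
  assumes "(-x+5*y) mod 4 = 0" "(3*x+y) mod 4 = 0"
  shows "((-((-x+5*y) div 4)+5*((3*x+y) div 4)) div 4, (3*((-x+5*y) div 4)+(3*x+y) div 4) div 4) = (x,y)"
    "h1 q ((-x+5*y) div 4, (3*x+y) div 4) = h1 q (x,y)"
  using rho1[OF md4[OF assms(1)] md4[OF assms(2)]] by auto

lemma rho2a:
  fixes x y :: int
  assumes "(x-15*y) mod 4 = 0" "(x+y) mod 4 = 0"
  shows "(((x-15*y) div 4+15*((x+y) div 4)) div 4, ((x+y) div 4 - (x-15*y) div 4) div 4) = (x,y)"
    "h2 q ((x-15*y) div 4, (x+y) div 4) = h2 q (x,y)"
  using rho2[OF md4[OF assms(1)] md4[OF assms(2)]] by auto

lemma rho2b: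
  fixes x y :: int
  assumes "(x+15*y) mod 4 = 0" "(y-x) mod 4 = 0"
  shows "(((x+15*y) div 4-15*((y-x) div 4)) div 4, ((x+15*y) div 4 + (y-x) div 4) div 4) = (x,y)"
  using rho2'[OF md4[OF assms(1)] md4[OF assms(2)]] by auto

lemma modE: "(e::int) mod m = r \<Longrightarrow> \<exists>k. e = m*k + r"
  using mult_div_mod_eq[of m e] by (intro exI[of _ "e div m"]) simp

lemma mf: "(a::int) = m*t + r \<Longrightarrow> 0 \<le> r \<Longrightarrow> r < m \<Longrightarrow> a mod m = r"
  by simp

lemma m1_B3:
  fixes x y :: int
  assumes "x mod 4 = 2" "y mod 4 = 2" "(x+y) mod 8 = 0"
  shows "\<exists>a b. 4*a = -x+5*y \<and> 4*b = 3*x+y \<and> (((a) mod 2 = 1 \<and> (b) mod 2 = 1 \<and> (a-b) mod 8 = 4))"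
proof -
  obtain k where k: "x = 4*k + 2" using modE[OF assms(1)] by blast
  obtain n where n: "x+y = 8*n + 0" using modE[OF assms(3)] by blast
  have yy: "y = 8*n - 4*k - 2" using k n by linarith
  have e1: "4*(10*n-6*k-3) = -x+5*y" using k yy by (simp add: algebra_simps)
  have e2: "4*(2*k+2*n+1) = 3*x+y" using k yy by (simp add: algebra_simps)
  have t: "(((10*n-6*k-3)) mod 2 = 1 \<and> ((2*k+2*n+1)) mod 2 = 1 \<and> ((10*n-6*k-3)-(2*k+2*n+1)) mod 8 = 4)"
  proof -
    have u0: "((10*n-6*k-3)) mod 2 = 1" by (rule mf[where t="-3*k + 5*n - 2"]) (simp_all add: algebra_simps)
    have u1: "((2*k+2*n+1)) mod 2 = 1" by (rule mf[where t="1*k + 1*n + 0"]) (simp_all add: algebra_simps)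
    have u2: "((10*n-6*k-3)-(2*k+2*n+1)) mod 8 = 4" by (rule mf[where t="-1*k + 1*n - 1"]) (simp_all add: algebra_simps)
    show ?thesis using u0 u1 u2 by blast
  qed
  show ?thesis by (rule exI[of _ "10*n-6*k-3"], rule exI[of _ "2*k+2*n+1"]) (use e1 e2 t in simp)
qed

lemma m1_B4:
  fixes x y :: int
  assumes "x mod 8 = 4" "y mod 8 = 0"
  shows "\<exists>a b. 4*a = -x+5*y \<and> 4*b = 3*x+y \<and> (((a) mod 2 = 1 \<and> (b) mod 2 = 1 \<and> (a-b) mod 8 = 4))"
proof -
  obtain k where k: "x = 8*k + 4" using modE[OF assms(1)] by blast
  obtain l where l: "y = 8*l + 0" using modE[OF assms(2)] by blast
  have e1: "4*(10*l-2*k-1) = -x+5*y" using k l by (simp add: algebra_simps)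
  have e2: "4*(6*k+2*l+3) = 3*x+y" using k l by (simp add: algebra_simps)
  have t: "(((10*l-2*k-1)) mod 2 = 1 \<and> ((6*k+2*l+3)) mod 2 = 1 \<and> ((10*l-2*k-1)-(6*k+2*l+3)) mod 8 = 4)"
  proof -
    have u0: "((10*l-2*k-1)) mod 2 = 1" by (rule mf[where t="-1*k + 5*l - 1"]) (simp_all add: algebra_simps)
    have u1: "((6*k+2*l+3)) mod 2 = 1" by (rule mf[where t="3*k + 1*l + 1"]) (simp_all add: algebra_simps)
    have u2: "((10*l-2*k-1)-(6*k+2*l+3)) mod 8 = 4" by (rule mf[where t="-1*k + 1*l - 1"]) (simp_all add: algebra_simps)
    show ?thesis using u0 u1 u2 by blast
  qed
  show ?thesis by (rule exI[of _ "10*l-2*k-1"], rule exI[of _ "6*k+2*l+3"]) (use e1 e2 t in simp)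
qed

lemma m1_B5:
  fixes x y :: int
  assumes "x mod 8 = 0" "y mod 8 = 4"
  shows "\<exists>a b. 4*a = -x+5*y \<and> 4*b = 3*x+y \<and> (((a) mod 2 = 1 \<and> (b) mod 2 = 1 \<and> (a-b) mod 8 = 4))"
proof -
  obtain k where k: "x = 8*k + 0" using modE[OF assms(1)] by blast
  obtain l where l: "y = 8*l + 4" using modE[OF assms(2)] by blast
  have e1: "4*(10*l-2*k+5) = -x+5*y" using k l by (simp add: algebra_simps)
  have e2: "4*(6*k+2*l+1) = 3*x+y" using k l by (simp add: algebra_simps)
  have t: "(((10*l-2*k+5)) mod 2 = 1 \<and> ((6*k+2*l+1)) mod 2 = 1 \<and> ((10*l-2*k+5)-(6*k+2*l+1)) mod 8 = 4)"
  proof -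
    have u0: "((10*l-2*k+5)) mod 2 = 1" by (rule mf[where t="-1*k + 5*l + 2"]) (simp_all add: algebra_simps)
    have u1: "((6*k+2*l+1)) mod 2 = 1" by (rule mf[where t="3*k + 1*l + 0"]) (simp_all add: algebra_simps)
    have u2: "((10*l-2*k+5)-(6*k+2*l+1)) mod 8 = 4" by (rule mf[where t="-1*k + 1*l + 0"]) (simp_all add: algebra_simps)
    show ?thesis using u0 u1 u2 by blast
  qed
  show ?thesis by (rule exI[of _ "10*l-2*k+5"], rule exI[of _ "6*k+2*l+1"]) (use e1 e2 t in simp)
qed

lemma m1_Sb:
  fixes x y :: int
  assumes "x mod 2 = 1" "y mod 2 = 1" "(x-y) mod 8 = 4"
  shows "\<exists>a b. 4*a = -x+5*y \<and> 4*b = 3*x+y \<and> (((a) mod 4 = 2 \<and> (b) mod 4 = 2 \<and> (a+b) mod 8 = 0) \<or> ((a) mod 8 = 4 \<and> (b) mod 8 = 0) \<or> ((a) mod 8 = 0 \<and> (b) mod 8 = 4))"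
proof -
  obtain k where k: "x = 2*k + 1" using modE[OF assms(1)] by blast
  obtain n where n: "x-y = 8*n + 4" using modE[OF assms(3)] by blast
  have yy: "y = 2*k - 8*n - 3" using k n by linarith
  have e1: "4*(2*k-10*n-4) = -x+5*y" using k yy by (simp add: algebra_simps)
  have e2: "4*(2*k-2*n) = 3*x+y" using k yy by (simp add: algebra_simps)
  have t: "(((2*k-10*n-4)) mod 4 = 2 \<and> ((2*k-2*n)) mod 4 = 2 \<and> ((2*k-10*n-4)+(2*k-2*n)) mod 8 = 0) \<or> (((2*k-10*n-4)) mod 8 = 4 \<and> ((2*k-2*n)) mod 8 = 0) \<or> (((2*k-10*n-4)) mod 8 = 0 \<and> ((2*k-2*n)) mod 8 = 4)"
  proof -
    obtain f where f: "k-n = 4*f + (k-n) mod 4" using modE[of "k-n" 4 "(k-n) mod 4"] by blast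
    have "(k-n) mod 4 = 0 \<or> (k-n) mod 4 = 1 \<or> (k-n) mod 4 = 2 \<or> (k-n) mod 4 = 3" by presburger
    then show ?thesis
    proof (elim disjE)
      assume r: "(k-n) mod 4 = 0"
      have kk: "k = 4*f + 1*n + 0" using f r by linarith
      have u0: "((2*k-10*n-4)) mod 8 = 4" by (rule mf[where t="1*f - 1*n - 1"]) (use kk in \<open>simp_all add: algebra_simps\<close>)
      have u1: "((2*k-2*n)) mod 8 = 0" by (rule mf[where t="1*f + 0"]) (use kk in \<open>simp_all add: algebra_simps\<close>)
      show ?thesis using u0 u1 by blast
    next
      assume r: "(k-n) mod 4 = 1"
      have kk: "k = 4*f + 1*n + 1" using f r by linarith
      have u0: "((2*k-10*n-4)) mod 4 = 2" by (rule mf[where t="2*f - 2*n - 1"]) (use kk in \<open>simp_all add: algebra_simps\<close>)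
      have u1: "((2*k-2*n)) mod 4 = 2" by (rule mf[where t="2*f + 0"]) (use kk in \<open>simp_all add: algebra_simps\<close>)
      have u2: "((2*k-10*n-4)+(2*k-2*n)) mod 8 = 0" by (rule mf[where t="2*f - 1*n + 0"]) (use kk in \<open>simp_all add: algebra_simps\<close>)
      show ?thesis using u0 u1 u2 by blast
    next
      assume r: "(k-n) mod 4 = 2"
      have kk: "k = 4*f + 1*n + 2" using f r by linarith
      have u0: "((2*k-10*n-4)) mod 8 = 0" by (rule mf[where t="1*f - 1*n + 0"]) (use kk in \<open>simp_all add: algebra_simps\<close>)
      have u1: "((2*k-2*n)) mod 8 = 4" by (rule mf[where t="1*f + 0"]) (use kk in \<open>simp_all add: algebra_simps\<close>)
      show ?thesis using u0 u1 by blast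
    next
      assume r: "(k-n) mod 4 = 3"
      have kk: "k = 4*f + 1*n + 3" using f r by linarith
      have u0: "((2*k-10*n-4)) mod 4 = 2" by (rule mf[where t="2*f - 2*n + 0"]) (use kk in \<open>simp_all add: algebra_simps\<close>)
      have u1: "((2*k-2*n)) mod 4 = 2" by (rule mf[where t="2*f + 1"]) (use kk in \<open>simp_all add: algebra_simps\<close>)
      have u2: "((2*k-10*n-4)+(2*k-2*n)) mod 8 = 0" by (rule mf[where t="2*f - 1*n + 1"]) (use kk in \<open>simp_all add: algebra_simps\<close>)
      show ?thesis using u0 u1 u2 by blast
    qed
  qed
  show ?thesis by (rule exI[of _ "2*k-10*n-4"], rule exI[of _ "2*k-2*n"]) (use e1 e2 t in simp)
qed

lemma m2_K1:
  fixes x y :: int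
  assumes "x mod 8 = 4" "y mod 8 = 0"
  shows "\<exists>a b. 4*a = x-15*y \<and> 4*b = x+y \<and> (((a) mod 2 = 1 \<and> (b) mod 2 = 1 \<and> (a-b) mod 8 = 0))"
proof -
  obtain k where k: "x = 8*k + 4" using modE[OF assms(1)] by blast
  obtain l where l: "y = 8*l + 0" using modE[OF assms(2)] by blast
  have e1: "4*(2*k+1-30*l) = x-15*y" using k l by (simp add: algebra_simps)
  have e2: "4*(2*k+2*l+1) = x+y" using k l by (simp add: algebra_simps)
  have t: "(((2*k+1-30*l)) mod 2 = 1 \<and> ((2*k+2*l+1)) mod 2 = 1 \<and> ((2*k+1-30*l)-(2*k+2*l+1)) mod 8 = 0)"
  proof -
    have u0: "((2*k+1-30*l)) mod 2 = 1" by (rule mf[where t="1*k - 15*l + 0"]) (simp_all add: algebra_simps)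
    have u1: "((2*k+2*l+1)) mod 2 = 1" by (rule mf[where t="1*k + 1*l + 0"]) (simp_all add: algebra_simps)
    have u2: "((2*k+1-30*l)-(2*k+2*l+1)) mod 8 = 0" by (rule mf[where t="-4*l + 0"]) (simp_all add: algebra_simps)
    show ?thesis using u0 u1 u2 by blast
  qed
  show ?thesis by (rule exI[of _ "2*k+1-30*l"], rule exI[of _ "2*k+2*l+1"]) (use e1 e2 t in simp)
qed

lemma m2_K2:
  fixes x y :: int
  assumes "x mod 8 = 0" "y mod 8 = 4"
  shows "\<exists>a b. 4*a = x-15*y \<and> 4*b = x+y \<and> (((a) mod 2 = 1 \<and> (b) mod 2 = 1 \<and> (a-b) mod 8 = 0))"
proof -
  obtain k where k: "x = 8*k + 0" using modE[OF assms(1)] by blast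
  obtain l where l: "y = 8*l + 4" using modE[OF assms(2)] by blast
  have e1: "4*(2*k-30*l-15) = x-15*y" using k l by (simp add: algebra_simps)
  have e2: "4*(2*k+2*l+1) = x+y" using k l by (simp add: algebra_simps)
  have t: "(((2*k-30*l-15)) mod 2 = 1 \<and> ((2*k+2*l+1)) mod 2 = 1 \<and> ((2*k-30*l-15)-(2*k+2*l+1)) mod 8 = 0)"
  proof -
    have u0: "((2*k-30*l-15)) mod 2 = 1" by (rule mf[where t="1*k - 15*l - 8"]) (simp_all add: algebra_simps)
    have u1: "((2*k+2*l+1)) mod 2 = 1" by (rule mf[where t="1*k + 1*l + 0"]) (simp_all add: algebra_simps)
    have u2: "((2*k-30*l-15)-(2*k+2*l+1)) mod 8 = 0" by (rule mf[where t="-4*l - 2"]) (simp_all add: algebra_simps)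
    show ?thesis using u0 u1 u2 by blast
  qed
  show ?thesis by (rule exI[of _ "2*k-30*l-15"], rule exI[of _ "2*k+2*l+1"]) (use e1 e2 t in simp)
qed

lemma m2_K3:
  fixes x y :: int
  assumes "x mod 4 = 2" "y mod 4 = 2" "(x-y) mod 8 = 0"
  shows "\<exists>a b. 4*a = x-15*y \<and> 4*b = x+y \<and> (((a) mod 2 = 1 \<and> (b) mod 2 = 1 \<and> (a-b) mod 8 = 0))"
proof -
  obtain k where k: "x = 4*k + 2" using modE[OF assms(1)] by blast
  obtain n where n: "x-y = 8*n + 0" using modE[OF assms(3)] by blast
  have yy: "y = 4*k + 2 - 8*n" using k n by linarith
  have e1: "4*(30*n-14*k-7) = x-15*y" using k yy by (simp add: algebra_simps)
  have e2: "4*(2*k+1-2*n) = x+y" using k yy by (simp add: algebra_simps)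
  have t: "(((30*n-14*k-7)) mod 2 = 1 \<and> ((2*k+1-2*n)) mod 2 = 1 \<and> ((30*n-14*k-7)-(2*k+1-2*n)) mod 8 = 0)"
  proof -
    have u0: "((30*n-14*k-7)) mod 2 = 1" by (rule mf[where t="-7*k + 15*n - 4"]) (simp_all add: algebra_simps)
    have u1: "((2*k+1-2*n)) mod 2 = 1" by (rule mf[where t="1*k - 1*n + 0"]) (simp_all add: algebra_simps)
    have u2: "((30*n-14*k-7)-(2*k+1-2*n)) mod 8 = 0" by (rule mf[where t="-2*k + 4*n - 1"]) (simp_all add: algebra_simps)
    show ?thesis using u0 u1 u2 by blast
  qed
  show ?thesis by (rule exI[of _ "30*n-14*k-7"], rule exI[of _ "2*k+1-2*n"]) (use e1 e2 t in simp)
qed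

lemma m2_R:
  fixes x y :: int
  assumes "x mod 2 = 1" "y mod 2 = 1" "(x-y) mod 8 = 0"
  shows "\<exists>a b. 4*a = x+15*y \<and> 4*b = y-x \<and> (((a) mod 8 = 4 \<and> (b) mod 8 = 0) \<or> ((a) mod 8 = 0 \<and> (b) mod 8 = 4) \<or> ((a) mod 4 = 2 \<and> (b) mod 4 = 2 \<and> (a-b) mod 8 = 0))"
proof -
  obtain k where k: "x = 2*k + 1" using modE[OF assms(1)] by blast
  obtain n where n: "x-y = 8*n + 0" using modE[OF assms(3)] by blast
  have yy: "y = 2*k + 1 - 8*n" using k n by linarith
  have e1: "4*(8*k+4-30*n) = x+15*y" using k yy by (simp add: algebra_simps)
  have e2: "4*(-2*n) = y-x" using k yy by (simp add: algebra_simps)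
  have t: "(((8*k+4-30*n)) mod 8 = 4 \<and> ((-2*n)) mod 8 = 0) \<or> (((8*k+4-30*n)) mod 8 = 0 \<and> ((-2*n)) mod 8 = 4) \<or> (((8*k+4-30*n)) mod 4 = 2 \<and> ((-2*n)) mod 4 = 2 \<and> ((8*k+4-30*n)-(-2*n)) mod 8 = 0)"
  proof -
    obtain f where f: "n = 4*f + (n) mod 4" using modE[of "n" 4 "(n) mod 4"] by blast
    have "(n) mod 4 = 0 \<or> (n) mod 4 = 1 \<or> (n) mod 4 = 2 \<or> (n) mod 4 = 3" by presburger
    then show ?thesis
    proof (elim disjE)
      assume r: "(n) mod 4 = 0"
      have kk: "n = 4*f + 0" using f r by linarith
      have u0: "((8*k+4-30*n)) mod 8 = 4" by (rule mf[where t="-15*f + 1*k + 0"]) (use kk in \<open>simp_all add: algebra_simps\<close>)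
      have u1: "((-2*n)) mod 8 = 0" by (rule mf[where t="-1*f + 0"]) (use kk in \<open>simp_all add: algebra_simps\<close>)
      show ?thesis using u0 u1 by blast
    next
      assume r: "(n) mod 4 = 1"
      have kk: "n = 4*f + 1" using f r by linarith
      have u0: "((8*k+4-30*n)) mod 4 = 2" by (rule mf[where t="-30*f + 2*k - 7"]) (use kk in \<open>simp_all add: algebra_simps\<close>)
      have u1: "((-2*n)) mod 4 = 2" by (rule mf[where t="-2*f - 1"]) (use kk in \<open>simp_all add: algebra_simps\<close>)
      have u2: "((8*k+4-30*n)-(-2*n)) mod 8 = 0" by (rule mf[where t="-14*f + 1*k - 3"]) (use kk in \<open>simp_all add: algebra_simps\<close>)
      show ?thesis using u0 u1 u2 by blast
    next
      assume r: "(n) mod 4 = 2"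
      have kk: "n = 4*f + 2" using f r by linarith
      have u0: "((8*k+4-30*n)) mod 8 = 0" by (rule mf[where t="-15*f + 1*k - 7"]) (use kk in \<open>simp_all add: algebra_simps\<close>)
      have u1: "((-2*n)) mod 8 = 4" by (rule mf[where t="-1*f - 1"]) (use kk in \<open>simp_all add: algebra_simps\<close>)
      show ?thesis using u0 u1 by blast
    next
      assume r: "(n) mod 4 = 3"
      have kk: "n = 4*f + 3" using f r by linarith
      have u0: "((8*k+4-30*n)) mod 4 = 2" by (rule mf[where t="-30*f + 2*k - 22"]) (use kk in \<open>simp_all add: algebra_simps\<close>)
      have u1: "((-2*n)) mod 4 = 2" by (rule mf[where t="-2*f - 2"]) (use kk in \<open>simp_all add: algebra_simps\<close>)
      have u2: "((8*k+4-30*n)-(-2*n)) mod 8 = 0" by (rule mf[where t="-14*f + 1*k - 10"]) (use kk in \<open>simp_all add: algebra_simps\<close>)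
      show ?thesis using u0 u1 u2 by blast
    qed
  qed
  show ?thesis by (rule exI[of _ "8*k+4-30*n"], rule exI[of _ "-2*n"]) (use e1 e2 t in simp)
qed


lemma div4: "4*a = (e::int) \<Longrightarrow> e div 4 = a"
  by auto

lemma bij_step1:
  fixes x y a b :: int
  assumes "4*a = -x+5*y" "4*b = 3*x+y"
  shows "(\<lambda>(x,y). ((-x+5*y) div 4, (3*x+y) div 4)) (x,y) = (a,b)"
        "(\<lambda>(x,y). ((-x+5*y) div 4, (3*x+y) div 4)) (a,b) = (x,y)"
        "h1 q (a,b) = h1 q (x,y)"
  using div4[OF assms(1)] div4[OF assms(2)] rho1[OF assms] by auto

lemma bij_step2:
  fixes x y a b :: int
  assumes "4*a = x-15*y" "4*b = x+y"
  shows "(\<lambda>(x,y). ((x-15*y) div 4, (x+y) div 4)) (x,y) = (a,b)"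
        "(\<lambda>(x,y). ((x+15*y) div 4, (y-x) div 4)) (a,b) = (x,y)"
        "h2 q (a,b) = h2 q (x,y)"
  using div4[OF assms(1)] div4[OF assms(2)] rho2[OF assms] by auto

lemma bij_step2':
  fixes x y a b :: int
  assumes "4*a = x+15*y" "4*b = y-x"
  shows "(\<lambda>(x,y). ((x+15*y) div 4, (y-x) div 4)) (x,y) = (a,b)"
        "(\<lambda>(x,y). ((x-15*y) div 4, (x+y) div 4)) (a,b) = (x,y)"
  using div4[OF assms(1)] div4[OF assms(2)] rho2'[OF assms] by auto

lemma r16: "0 \<le> (r::int) \<Longrightarrow> r < 16 \<Longrightarrow> r \<in> {0,1,2,3,4,5,6,7,8,9,10,11,12,13,14,15}"
proof -
  assume "0 \<le> r" "r < 16"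
  then have "r \<in> {0..15}" by simp
  also have "{0..15::int} = set [0..15]" by (simp only: set_upto)
  also have "\<dots> = {0,1,2,3,4,5,6,7,8,9,10,11,12,13,14,15}" by (simp add: upto.simps del: set_upto)
  finally show ?thesis .
qed

lemma mod16_cases: "(z::int) mod 16 \<in> {0,1,2,3,4,5,6,7,8,9,10,11,12,13,14,15}"
  by (rule r16) simp_all

lemma mod16_red: "(z::int) mod 2 = (z mod 16) mod 2" "(z::int) mod 4 = (z mod 16) mod 4" "(z::int) mod 8 = (z mod 16) mod 8"
  by (simp_all add: mod_mod_cancel)

lemma z4: "(z::int) mod 4 = 0 \<Longrightarrow> z mod 8 = 0 \<or> z mod 8 = 4"
  unfolding mod16_red[of z] using mod16_cases[of z] by auto
lemma z2: "(z::int) mod 2 = 0 \<Longrightarrow> z mod 4 = 0 \<or> z mod 4 = 2"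
  unfolding mod16_red[of z] using mod16_cases[of z] by auto
lemma m84: "(z::int) mod 8 = 4 \<Longrightarrow> z mod 4 = 2 \<Longrightarrow> False"
  unfolding mod16_red[of z] using mod16_cases[of z] by auto
lemma m80: "(z::int) mod 8 = 0 \<Longrightarrow> z mod 4 = 2 \<Longrightarrow> False"
  unfolding mod16_red[of z] using mod16_cases[of z] by auto
lemma d16a: "(z::int) mod 16 = 0 \<Longrightarrow> z mod 8 = 4 \<Longrightarrow> False"
  unfolding mod16_red[of z] using mod16_cases[of z] by auto
lemma d16b: "(z::int) mod 16 = 8 \<Longrightarrow> z mod 8 = 4 \<Longrightarrow> False"
  unfolding mod16_red[of z] using mod16_cases[of z] by auto
lemma cov4: "(z::int) mod 4 = 0 \<longleftrightarrow> (z mod 16 = 0 \<or> z mod 16 = 8 \<or> z mod 8 = 4)"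
  unfolding mod16_red[of z] using mod16_cases[of z] by auto
lemma cov8: "(z::int) mod 8 = 0 \<longleftrightarrow> (z mod 16 = 0 \<or> z mod 16 = 8)"
  unfolding mod16_red[of z] using mod16_cases[of z] by auto
lemma odd8: "(z::int) mod 2 = 1 \<Longrightarrow> z mod 8 = 1 \<or> z mod 8 = 3 \<or> z mod 8 = 5 \<or> z mod 8 = 7"
  unfolding mod16_red[of z] using mod16_cases[of z] by auto

lemma covX: "(x::int) mod 2 = 1 \<Longrightarrow> y mod 2 = 1 \<Longrightarrow>
   (x-y) mod 8 = 0 \<or> (x-3*y) mod 8 = 0 \<or> (x+y) mod 8 = 0 \<or> (x+3*y) mod 8 = 0"
proof -
  assume a: "x mod 2 = 1" "y mod 2 = 1"
  have e1: "(x-y) mod 8 = (x mod 8 - y mod 8) mod 8" "(x+y) mod 8 = (x mod 8 + y mod 8) mod 8"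
    by (simp_all add: mod_simps)
  have e2: "(x-3*y) mod 8 = (x mod 8 - 3*(y mod 8)) mod 8"
    by (metis mod_diff_eq mod_diff_right_eq mod_mult_right_eq)
  have e3: "(x+3*y) mod 8 = (x mod 8 + 3*(y mod 8)) mod 8"
    by (metis mod_add_eq mod_add_right_eq mod_mult_right_eq)
  note e = e1 e2 e3
  show ?thesis unfolding e using odd8[OF a(1)] odd8[OF a(2)] by auto
qed

lemma rB3:
  fixes x y :: int
  assumes h: "(x) mod 4 = 2 \<and> (y) mod 4 = 2 \<and> (x+y) mod 8 = 0"
  shows "(-x) mod 4 = 2 \<and> (y) mod 4 = 2 \<and> (-x+y) mod 8 = 4"
proof -
  have hh: "(x) mod 4 = 2" "(y) mod 4 = 2" "(x+y) mod 8 = 0" using h by simp_all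
  obtain k where k: "x = 4*k + 2" using modE[OF hh(1)] by blast
  obtain n where n: "x+y = 8*n + 0" using modE[OF hh(3)] by blast
  have yy: "y = -4*k + 8*n - 2" using k n by linarith
  have u0: "(-x) mod 4 = 2" by (rule mf[where t="-1*k - 1"]) (use k yy in \<open>simp_all add: algebra_simps\<close>)
  have u1: "(y) mod 4 = 2" by (rule mf[where t="-1*k + 2*n - 1"]) (use k yy in \<open>simp_all add: algebra_simps\<close>)
  have u2: "(-x+y) mod 8 = 4" by (rule mf[where t="-1*k + 1*n - 1"]) (use k yy in \<open>simp_all add: algebra_simps\<close>)
  show ?thesis using u0 u1 u2 by blast
qed

lemma rB3':
  fixes x y :: int
  assumes h: "(x) mod 4 = 2 \<and> (y) mod 4 = 2 \<and> (x+y) mod 8 = 4"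
  shows "(-x) mod 4 = 2 \<and> (y) mod 4 = 2 \<and> (-x+y) mod 8 = 0"
proof -
  have hh: "(x) mod 4 = 2" "(y) mod 4 = 2" "(x+y) mod 8 = 4" using h by simp_all
  obtain k where k: "x = 4*k + 2" using modE[OF hh(1)] by blast
  obtain n where n: "x+y = 8*n + 4" using modE[OF hh(3)] by blast
  have yy: "y = -4*k + 8*n + 2" using k n by linarith
  have u0: "(-x) mod 4 = 2" by (rule mf[where t="-1*k - 1"]) (use k yy in \<open>simp_all add: algebra_simps\<close>)
  have u1: "(y) mod 4 = 2" by (rule mf[where t="-1*k + 2*n + 0"]) (use k yy in \<open>simp_all add: algebra_simps\<close>)
  have u2: "(-x+y) mod 8 = 0" by (rule mf[where t="-1*k + 1*n + 0"]) (use k yy in \<open>simp_all add: algebra_simps\<close>)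
  show ?thesis using u0 u1 u2 by blast
qed

lemma rE:
  fixes x y :: int
  assumes h: "(x) mod 2 = 1 \<and> (y) mod 2 = 1 \<and> (x-y) mod 4 = 0"
  shows "(-x) mod 2 = 1 \<and> (y) mod 2 = 1 \<and> (-x-y) mod 4 = 2"
proof -
  have hh: "(x) mod 2 = 1" "(y) mod 2 = 1" "(x-y) mod 4 = 0" using h by simp_all
  obtain k where k: "x = 2*k + 1" using modE[OF hh(1)] by blast
  obtain n where n: "x-y = 4*n + 0" using modE[OF hh(3)] by blast
  have yy: "y = 2*k - 4*n + 1" using k n by linarith
  have u0: "(-x) mod 2 = 1" by (rule mf[where t="-1*k - 1"]) (use k yy in \<open>simp_all add: algebra_simps\<close>)
  have u1: "(y) mod 2 = 1" by (rule mf[where t="1*k - 2*n + 0"]) (use k yy in \<open>simp_all add: algebra_simps\<close>)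
  have u2: "(-x-y) mod 4 = 2" by (rule mf[where t="-1*k + 1*n - 1"]) (use k yy in \<open>simp_all add: algebra_simps\<close>)
  show ?thesis using u0 u1 u2 by blast
qed

lemma rE':
  fixes x y :: int
  assumes h: "(x) mod 2 = 1 \<and> (y) mod 2 = 1 \<and> (x-y) mod 4 = 2"
  shows "(-x) mod 2 = 1 \<and> (y) mod 2 = 1 \<and> (-x-y) mod 4 = 0"
proof -
  have hh: "(x) mod 2 = 1" "(y) mod 2 = 1" "(x-y) mod 4 = 2" using h by simp_all
  obtain k where k: "x = 2*k + 1" using modE[OF hh(1)] by blast
  obtain n where n: "x-y = 4*n + 2" using modE[OF hh(3)] by blast
  have yy: "y = 2*k - 4*n - 1" using k n by linarith
  have u0: "(-x) mod 2 = 1" by (rule mf[where t="-1*k - 1"]) (use k yy in \<open>simp_all add: algebra_simps\<close>)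
  have u1: "(y) mod 2 = 1" by (rule mf[where t="1*k - 2*n - 1"]) (use k yy in \<open>simp_all add: algebra_simps\<close>)
  have u2: "(-x-y) mod 4 = 0" by (rule mf[where t="-1*k + 1*n + 0"]) (use k yy in \<open>simp_all add: algebra_simps\<close>)
  show ?thesis using u0 u1 u2 by blast
qed

lemma rK3:
  fixes x y :: int
  assumes h: "(x) mod 4 = 2 \<and> (y) mod 4 = 2 \<and> (x-y) mod 8 = 0"
  shows "(-x) mod 4 = 2 \<and> (y) mod 4 = 2 \<and> (-x-y) mod 8 = 4"
proof -
  have hh: "(x) mod 4 = 2" "(y) mod 4 = 2" "(x-y) mod 8 = 0" using h by simp_all
  obtain k where k: "x = 4*k + 2" using modE[OF hh(1)] by blast
  obtain n where n: "x-y = 8*n + 0" using modE[OF hh(3)] by blast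
  have yy: "y = 4*k - 8*n + 2" using k n by linarith
  have u0: "(-x) mod 4 = 2" by (rule mf[where t="-1*k - 1"]) (use k yy in \<open>simp_all add: algebra_simps\<close>)
  have u1: "(y) mod 4 = 2" by (rule mf[where t="1*k - 2*n + 0"]) (use k yy in \<open>simp_all add: algebra_simps\<close>)
  have u2: "(-x-y) mod 8 = 4" by (rule mf[where t="-1*k + 1*n - 1"]) (use k yy in \<open>simp_all add: algebra_simps\<close>)
  show ?thesis using u0 u1 u2 by blast
qed

lemma rK3':
  fixes x y :: int
  assumes h: "(x) mod 4 = 2 \<and> (y) mod 4 = 2 \<and> (x-y) mod 8 = 4"
  shows "(-x) mod 4 = 2 \<and> (y) mod 4 = 2 \<and> (-x-y) mod 8 = 0"
proof -
  have hh: "(x) mod 4 = 2" "(y) mod 4 = 2" "(x-y) mod 8 = 4" using h by simp_all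
  obtain k where k: "x = 4*k + 2" using modE[OF hh(1)] by blast
  obtain n where n: "x-y = 8*n + 4" using modE[OF hh(3)] by blast
  have yy: "y = 4*k - 8*n - 2" using k n by linarith
  have u0: "(-x) mod 4 = 2" by (rule mf[where t="-1*k - 1"]) (use k yy in \<open>simp_all add: algebra_simps\<close>)
  have u1: "(y) mod 4 = 2" by (rule mf[where t="1*k - 2*n - 1"]) (use k yy in \<open>simp_all add: algebra_simps\<close>)
  have u2: "(-x-y) mod 8 = 0" by (rule mf[where t="-1*k + 1*n + 0"]) (use k yy in \<open>simp_all add: algebra_simps\<close>)
  show ?thesis using u0 u1 u2 by blast
qed

lemma rXa:
  fixes x y :: int
  assumes h: "(x) mod 2 = 1 \<and> (y) mod 2 = 1 \<and> (x-y) mod 8 = 0"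
  shows "(-x) mod 2 = 1 \<and> (y) mod 2 = 1 \<and> ((-x+y) mod 8 = 0 \<or> (-x+3*y) mod 8 = 0)"
proof -
  have hh: "(x) mod 2 = 1" "(y) mod 2 = 1" "(x-y) mod 8 = 0" using h by simp_all
  obtain k where k: "x = 2*k + 1" using modE[OF hh(1)] by blast
  obtain n where n: "x-y = 8*n + 0" using modE[OF hh(3)] by blast
  have yy: "y = 2*k - 8*n + 1" using k n by linarith
  have u0: "(-x) mod 2 = 1" by (rule mf[where t="-1*k - 1"]) (use k yy in \<open>simp_all add: algebra_simps\<close>)
  have u1: "(y) mod 2 = 1" by (rule mf[where t="1*k - 4*n + 0"]) (use k yy in \<open>simp_all add: algebra_simps\<close>)
  have u2: "(-x+y) mod 8 = 0" by (rule mf[where t="-1*n + 0"]) (use k yy in \<open>simp_all add: algebra_simps\<close>)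
  show ?thesis using u0 u1 u2 by blast
qed

lemma rXb:
  fixes x y :: int
  assumes h: "(x) mod 2 = 1 \<and> (y) mod 2 = 1 \<and> (x-3*y) mod 8 = 0"
  shows "(-x) mod 2 = 1 \<and> (y) mod 2 = 1 \<and> ((-x+y) mod 8 = 0 \<or> (-x+3*y) mod 8 = 0)"
proof -
  have hh: "(x) mod 2 = 1" "(y) mod 2 = 1" "(x-3*y) mod 8 = 0" using h by simp_all
  obtain l where l: "y = 2*l + 1" using modE[OF hh(2)] by blast
  obtain n where n: "x-3*y = 8*n + 0" using modE[OF hh(3)] by blast
  have xx: "x = 6*l + 8*n + 3" using l n by linarith
  have u0: "(-x) mod 2 = 1" by (rule mf[where t="-3*l - 4*n - 2"]) (use xx l in \<open>simp_all add: algebra_simps\<close>)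
  have u1: "(y) mod 2 = 1" by (rule mf[where t="1*l + 0"]) (use xx l in \<open>simp_all add: algebra_simps\<close>)
  have u2: "(-x+3*y) mod 8 = 0" by (rule mf[where t="-1*n + 0"]) (use xx l in \<open>simp_all add: algebra_simps\<close>)
  show ?thesis using u0 u1 u2 by blast
qed

lemma rXc:
  fixes x y :: int
  assumes h: "(x) mod 2 = 1 \<and> (y) mod 2 = 1 \<and> (x+y) mod 8 = 0"
  shows "(-x) mod 2 = 1 \<and> (y) mod 2 = 1 \<and> ((-x-y) mod 8 = 0 \<or> (-x-3*y) mod 8 = 0)"
proof -
  have hh: "(x) mod 2 = 1" "(y) mod 2 = 1" "(x+y) mod 8 = 0" using h by simp_all
  obtain k where k: "x = 2*k + 1" using modE[OF hh(1)] by blast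
  obtain n where n: "x+y = 8*n + 0" using modE[OF hh(3)] by blast
  have yy: "y = -2*k + 8*n - 1" using k n by linarith
  have u0: "(-x) mod 2 = 1" by (rule mf[where t="-1*k - 1"]) (use k yy in \<open>simp_all add: algebra_simps\<close>)
  have u1: "(y) mod 2 = 1" by (rule mf[where t="-1*k + 4*n - 1"]) (use k yy in \<open>simp_all add: algebra_simps\<close>)
  have u2: "(-x-y) mod 8 = 0" by (rule mf[where t="-1*n + 0"]) (use k yy in \<open>simp_all add: algebra_simps\<close>)
  show ?thesis using u0 u1 u2 by blast
qed

lemma rXd:
  fixes x y :: int
  assumes h: "(x) mod 2 = 1 \<and> (y) mod 2 = 1 \<and> (x+3*y) mod 8 = 0"
  shows "(-x) mod 2 = 1 \<and> (y) mod 2 = 1 \<and> ((-x-y) mod 8 = 0 \<or> (-x-3*y) mod 8 = 0)"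
proof -
  have hh: "(x) mod 2 = 1" "(y) mod 2 = 1" "(x+3*y) mod 8 = 0" using h by simp_all
  obtain l where l: "y = 2*l + 1" using modE[OF hh(2)] by blast
  obtain n where n: "x+3*y = 8*n + 0" using modE[OF hh(3)] by blast
  have xx: "x = -6*l + 8*n - 3" using l n by linarith
  have u0: "(-x) mod 2 = 1" by (rule mf[where t="3*l - 4*n + 1"]) (use xx l in \<open>simp_all add: algebra_simps\<close>)
  have u1: "(y) mod 2 = 1" by (rule mf[where t="1*l + 0"]) (use xx l in \<open>simp_all add: algebra_simps\<close>)
  have u2: "(-x-3*y) mod 8 = 0" by (rule mf[where t="-1*n + 0"]) (use xx l in \<open>simp_all add: algebra_simps\<close>)
  show ?thesis using u0 u1 u2 by blast
qed

lemma sB3: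
  fixes x y :: int
  assumes h: "(x) mod 4 = 2 \<and> (y) mod 4 = 2"
  shows "(x+y) mod 4 = 0"
proof -
  have hh: "(x) mod 4 = 2" "(y) mod 4 = 2" using h by simp_all
  obtain k where k: "x = 4*k + 2" using modE[OF hh(1)] by blast
  obtain l where l: "y = 4*l + 2" using modE[OF hh(2)] by blast
  have u0: "(x+y) mod 4 = 0" by (rule mf[where t="1*k + 1*l + 1"]) (use k l in \<open>simp_all add: algebra_simps\<close>)
  show ?thesis using u0 by blast
qed

lemma sK3:
  fixes x y :: int
  assumes h: "(x) mod 4 = 2 \<and> (y) mod 4 = 2"
  shows "(x-y) mod 4 = 0"
proof -
  have hh: "(x) mod 4 = 2" "(y) mod 4 = 2" using h by simp_all
  obtain k where k: "x = 4*k + 2" using modE[OF hh(1)] by blast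
  obtain l where l: "y = 4*l + 2" using modE[OF hh(2)] by blast
  have u0: "(x-y) mod 4 = 0" by (rule mf[where t="1*k - 1*l + 0"]) (use k l in \<open>simp_all add: algebra_simps\<close>)
  show ?thesis using u0 by blast
qed

lemma sE:
  fixes x y :: int
  assumes h: "(x) mod 2 = 1 \<and> (y) mod 2 = 1"
  shows "(x-y) mod 2 = 0"
proof -
  have hh: "(x) mod 2 = 1" "(y) mod 2 = 1" using h by simp_all
  obtain k where k: "x = 2*k + 1" using modE[OF hh(1)] by blast
  obtain l where l: "y = 2*l + 1" using modE[OF hh(2)] by blast
  have u0: "(x-y) mod 2 = 0" by (rule mf[where t="1*k - 1*l + 0"]) (use k l in \<open>simp_all add: algebra_simps\<close>)
  show ?thesis using u0 by blast
qed

lemma cB3: "(x::int) mod 4 = 2 \<Longrightarrow> y mod 4 = 2 \<Longrightarrow> (x+y) mod 8 = 0 \<or> (x+y) mod 8 = 4"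
  using z4 sB3 by blast
lemma cK3: "(x::int) mod 4 = 2 \<Longrightarrow> y mod 4 = 2 \<Longrightarrow> (x-y) mod 8 = 0 \<or> (x-y) mod 8 = 4"
  using z4 sK3 by blast
lemma covE: "(x::int) mod 2 = 1 \<Longrightarrow> y mod 2 = 1 \<Longrightarrow> (x-y) mod 4 = 0 \<or> (x-y) mod 4 = 2"
  using z2 sE by blast

lemma dX1: "(y::int) mod 2 = 1 \<Longrightarrow> (x-y) mod 8 = 0 \<Longrightarrow> (x+y) mod 8 = 0 \<Longrightarrow> False"
proof -
  assume a: "y mod 2 = 1" "(x-y) mod 8 = 0" "(x+y) mod 8 = 0"
  obtain l where l: "y = 2*l + 1" using modE[OF a(1)] by blast
  obtain n where n: "x-y = 8*n + 0" using modE[OF a(2)] by blast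
  have xx: "x = 8*n + 2*l + 1" using l n by linarith
  have c: "(x+y) mod 4 = 2" by (rule mf[where t="2*n + l"]) (use xx l in \<open>simp_all add: algebra_simps\<close>)
  show False by (rule m80[OF a(3) c])
qed
lemma dX2: "(y::int) mod 2 = 1 \<Longrightarrow> (x-y) mod 8 = 0 \<Longrightarrow> (x+3*y) mod 8 = 0 \<Longrightarrow> False"
proof -
  assume a: "y mod 2 = 1" "(x-y) mod 8 = 0" "(x+3*y) mod 8 = 0"
  obtain l where l: "y = 2*l + 1" using modE[OF a(1)] by blast
  obtain n where n: "x-y = 8*n + 0" using modE[OF a(2)] by blast
  have xx: "x = 8*n + 2*l + 1" using l n by linarith
  have "(x+3*y) mod 8 = 4" by (rule mf[where t="n + l"]) (use xx l in \<open>simp_all add: algebra_simps\<close>)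
  with a(3) show False by simp
qed
lemma dX3: "(y::int) mod 2 = 1 \<Longrightarrow> (x-3*y) mod 8 = 0 \<Longrightarrow> (x+y) mod 8 = 0 \<Longrightarrow> False"
proof -
  assume a: "y mod 2 = 1" "(x-3*y) mod 8 = 0" "(x+y) mod 8 = 0"
  obtain l where l: "y = 2*l + 1" using modE[OF a(1)] by blast
  obtain n where n: "x-3*y = 8*n + 0" using modE[OF a(2)] by blast
  have xx: "x = 8*n + 6*l + 3" using l n by linarith
  have "(x+y) mod 8 = 4" by (rule mf[where t="n + l"]) (use xx l in \<open>simp_all add: algebra_simps\<close>)
  with a(3) show False by simp
qed
lemma dX4: "(y::int) mod 2 = 1 \<Longrightarrow> (x-3*y) mod 8 = 0 \<Longrightarrow> (x+3*y) mod 8 = 0 \<Longrightarrow> False"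
proof -
  assume a: "y mod 2 = 1" "(x-3*y) mod 8 = 0" "(x+3*y) mod 8 = 0"
  obtain l where l: "y = 2*l + 1" using modE[OF a(1)] by blast
  obtain n where n: "x-3*y = 8*n + 0" using modE[OF a(2)] by blast
  have xx: "x = 8*n + 6*l + 3" using l n by linarith
  have c: "(x+3*y) mod 4 = 2" by (rule mf[where t="2*n + 3*l + 1"]) (use xx l in \<open>simp_all add: algebra_simps\<close>)
  show False by (rule m80[OF a(3) c])
qed

lemma g16: "(y::int) mod 2 = 1 \<Longrightarrow> (x-y) mod 8 = 0 \<Longrightarrow> (x-3*y) mod 8 = 0 \<Longrightarrow> False"
proof -
  assume a: "y mod 2 = 1" "(x-y) mod 8 = 0" "(x-3*y) mod 8 = 0"
  obtain k where k: "y = 2*k + 1" using modE[OF a(1)] by blast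
  obtain n where n: "x-y = 8*n + 0" using modE[OF a(2)] by blast
  have xx: "x = 8*n + 2*k + 1" using k n by linarith
  have c: "(x-3*y) mod 4 = 2" by (rule mf[where t="2*n - k - 1"]) (use xx k in \<open>simp_all add: algebra_simps\<close>)
  show False by (rule m80[OF a(3) c])
qed
lemma g16a: "(y::int) mod 2 = 1 \<Longrightarrow> (x-y) mod 8 = 0 \<Longrightarrow> (x-3*y) mod 16 = 0 \<Longrightarrow> False"
proof -
  assume a: "y mod 2 = 1" "(x-y) mod 8 = 0" "(x-3*y) mod 16 = 0"
  have "(x-3*y) mod 8 = 0" using cov8[of "x-3*y"] a(3) by simp
  then show False by (rule g16[OF a(1,2)])
qed
lemma g16b: "(y::int) mod 2 = 1 \<Longrightarrow> (x-y) mod 8 = 0 \<Longrightarrow> (x-3*y) mod 16 = 8 \<Longrightarrow> False"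
proof -
  assume a: "y mod 2 = 1" "(x-y) mod 8 = 0" "(x-3*y) mod 16 = 8"
  have "(x-3*y) mod 8 = 0" using cov8[of "x-3*y"] a(3) by simp
  then show False by (rule g16[OF a(1,2)])
qed

lemma id1:
  fixes q :: complex
  assumes q: "norm q < 1"
  shows "ram_psi (q^3) * ram_psi (q^5) =
           ram_phi (q^60) * ram_psi (q^8) + q^14 * ram_phi (q^4) * ram_psi (q^120)
         + q^3 * ram_psi (q^12) * ram_psi (q^20) + q^5 * ram_phi (q^40) * ram_psi (q^48)
         + q^9 * ram_phi (q^24) * ram_psi (q^80)"
proof -
  define B3 where "B3 = {(x::int,y::int). x mod 4 = 2 \<and> y mod 4 = 2 \<and> (x+y) mod 8 = 0}"
  define B3' where "B3' = {(x::int,y::int). x mod 4 = 2 \<and> y mod 4 = 2 \<and> (x+y) mod 8 = 4}"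
  define B4 where "B4 = {(x::int,y::int). x mod 8 = 4 \<and> y mod 8 = 0}"
  define B5 where "B5 = {(x::int,y::int). x mod 8 = 0 \<and> y mod 8 = 4}"
  define A1 where "A1 = {(x::int,y::int). x mod 2 = 1 \<and> y mod 2 = 1 \<and> (x-y) mod 16 = 0}"
  define A2 where "A2 = {(x::int,y::int). x mod 2 = 1 \<and> y mod 2 = 1 \<and> (x-y) mod 16 = 8}"
  define Sb where "Sb = {(x::int,y::int). x mod 2 = 1 \<and> y mod 2 = 1 \<and> (x-y) mod 8 = 4}"
  define E where "E = {(x::int,y::int). x mod 2 = 1 \<and> y mod 2 = 1 \<and> (x-y) mod 4 = 0}"
  define E' where "E' = {(x::int,y::int). x mod 2 = 1 \<and> y mod 2 = 1 \<and> (x-y) mod 4 = 2}"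
  define O1 where "O1 = {(x::int,y::int). x mod 2 = 1 \<and> y mod 2 = 1}"
  define t1 where "t1 = q^0 * (ram_phi (q^60) * (2 * ram_psi (q^8)))"
  define t2 where "t2 = q^14 * (ram_phi (q^4) * (2 * ram_psi (q^120)))"
  define t3 where "t3 = q^3 * ((2 * ram_psi (q^12)) * (2 * ram_psi (q^20)))"
  define t4 where "t4 = q^5 * (ram_phi (q^40) * (2 * ram_psi (q^48)))"
  define t5 where "t5 = q^9 * (ram_phi (q^24) * (2 * ram_psi (q^80)))"
  define t0 where "t0 = q^0 * ((2 * ram_psi (q^3)) * (2 * ram_psi (q^5)))"
  have sC3: "(h1 q has_sum t3) (B3 \<union> B3')"
  proof -
    have "{(x::int,y::int). x mod 4 = 2 \<and> y mod 4 = 2} = B3 \<union> B3'"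
      unfolding B3_def B3'_def by (auto dest: cB3)
    with t1_C3[OF q] show ?thesis unfolding t3_def by simp
  qed
  have AB3: "\<And>x y. (x,y) \<in> B3 \<Longrightarrow> (-x,y) \<in> B3'"
    unfolding B3_def B3'_def mem_Collect_eq case_prod_conv by (rule rB3)
  have BA3: "\<And>x y. (x,y) \<in> B3' \<Longrightarrow> (-x,y) \<in> B3"
    unfolding B3_def B3'_def mem_Collect_eq case_prod_conv by (rule rB3')
  have D3: "B3 \<inter> B3' = {}" unfolding B3_def B3'_def by auto
  have sB3: "(h1 q has_sum (t3/2)) B3"
    by (rule refl_half[OF sC3 h1_neg AB3 BA3 D3])
  have sB45: "(h1 q has_sum (t4 + t5)) (B4 \<union> B5)"
    by (rule has_sum_Un_disjoint) (use t1_B4[OF q] t1_B5[OF q] in \<open>auto simp: t4_def t5_def B4_def B5_def\<close>)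
  have sU: "(h1 q has_sum (t3/2 + (t4 + t5))) (B3 \<union> (B4 \<union> B5))"
    by (rule has_sum_Un_disjoint[OF sB3 sB45]) (unfold B3_def B4_def B5_def, auto dest: m84 m80)
  have sSb: "(h1 q has_sum (t3/2 + (t4 + t5))) Sb"
  proof (rule invol_sum[OF sU, where i="\<lambda>(x,y). ((-x+5*y) div 4, (3*x+y) div 4)" and j="\<lambda>(x,y). ((-x+5*y) div 4, (3*x+y) div 4)"])
    fix x y :: int
    assume a: "(x,y) \<in> B3 \<union> (B4 \<union> B5)"
    have "\<exists>a b. 4*a = -x+5*y \<and> 4*b = 3*x+y \<and> ((a) mod 2 = 1 \<and> (b) mod 2 = 1 \<and> (a-b) mod 8 = 4)"
      using a m1_B3[of x y] m1_B4[of x y] m1_B5[of x y] unfolding B3_def B4_def B5_def by auto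
    then obtain a b where ab: "4*a = -x+5*y" "4*b = 3*x+y" "a mod 2 = 1 \<and> b mod 2 = 1 \<and> (a-b) mod 8 = 4"
      by blast
    show "(\<lambda>(x,y). ((-x+5*y) div 4, (3*x+y) div 4)) (x,y) \<in> Sb \<and>
       (\<lambda>(x,y). ((-x+5*y) div 4, (3*x+y) div 4)) ((\<lambda>(x,y). ((-x+5*y) div 4, (3*x+y) div 4)) (x,y)) = (x,y) \<and>
       h1 q ((\<lambda>(x,y). ((-x+5*y) div 4, (3*x+y) div 4)) (x,y)) = h1 q (x,y)"
      unfolding bij_step1(1)[OF ab(1,2)] bij_step1(2)[OF ab(1,2)] bij_step1(3)[OF ab(1,2)]
      using ab(3) unfolding Sb_def by simp
  next
    fix x y :: int
    assume a: "(x,y) \<in> Sb"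
    have "\<exists>a b. 4*a = -x+5*y \<and> 4*b = 3*x+y \<and> (((a) mod 4 = 2 \<and> (b) mod 4 = 2 \<and> (a+b) mod 8 = 0) \<or> ((a) mod 8 = 4 \<and> (b) mod 8 = 0) \<or> ((a) mod 8 = 0 \<and> (b) mod 8 = 4))"
      using a by (intro m1_Sb) (auto simp: Sb_def)
    then obtain a where "\<exists>b. 4*a = -x+5*y \<and> 4*b = 3*x+y \<and>
      (((a) mod 4 = 2 \<and> (b) mod 4 = 2 \<and> (a+b) mod 8 = 0) \<or> ((a) mod 8 = 4 \<and> (b) mod 8 = 0) \<or> ((a) mod 8 = 0 \<and> (b) mod 8 = 4))"
      by (rule exE)
    then obtain b where ab0: "4*a = -x+5*y \<and> 4*b = 3*x+y \<and>
      (((a) mod 4 = 2 \<and> (b) mod 4 = 2 \<and> (a+b) mod 8 = 0) \<or> ((a) mod 8 = 4 \<and> (b) mod 8 = 0) \<or> ((a) mod 8 = 0 \<and> (b) mod 8 = 4))"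
      by (rule exE)
    have ab: "4*a = -x+5*y" "4*b = 3*x+y"
      "((a) mod 4 = 2 \<and> (b) mod 4 = 2 \<and> (a+b) mod 8 = 0) \<or> ((a) mod 8 = 4 \<and> (b) mod 8 = 0) \<or> ((a) mod 8 = 0 \<and> (b) mod 8 = 4)"
      using ab0 by (rule conjunct1, rule conjunct1[OF conjunct2], rule conjunct2[OF conjunct2])
    show "(\<lambda>(x,y). ((-x+5*y) div 4, (3*x+y) div 4)) (x,y) \<in> B3 \<union> (B4 \<union> B5) \<and>
       (\<lambda>(x,y). ((-x+5*y) div 4, (3*x+y) div 4)) ((\<lambda>(x,y). ((-x+5*y) div 4, (3*x+y) div 4)) (x,y)) = (x,y)"
      unfolding bij_step1(1)[OF ab(1,2)] bij_step1(2)[OF ab(1,2)]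
      using ab(3) unfolding B3_def B4_def B5_def by auto
  qed
  have sA12: "(h1 q has_sum (t1 + t2)) (A1 \<union> A2)"
    by (rule has_sum_Un_disjoint) (use t1_A1[OF q] t1_A2[OF q] in \<open>auto simp: t1_def t2_def A1_def A2_def\<close>)
  have sE0: "(h1 q has_sum ((t1 + t2) + (t3/2 + (t4 + t5)))) ((A1 \<union> A2) \<union> Sb)"
    by (rule has_sum_Un_disjoint[OF sA12 sSb]) (unfold A1_def A2_def Sb_def, auto dest: d16a d16b)
  have "(A1 \<union> A2) \<union> Sb = E" unfolding A1_def A2_def Sb_def E_def by (auto simp: cov4)
  with sE0 have sE: "(h1 q has_sum ((t1 + t2) + (t3/2 + (t4 + t5)))) E" by simp
  have ABE: "\<And>x y. (x,y) \<in> E \<Longrightarrow> (-x,y) \<in> E'"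
    unfolding E_def E'_def mem_Collect_eq case_prod_conv by (rule rE)
  have BAE: "\<And>x y. (x,y) \<in> E' \<Longrightarrow> (-x,y) \<in> E"
    unfolding E_def E'_def mem_Collect_eq case_prod_conv by (rule rE')
  have DE: "E \<inter> E' = {}" unfolding E_def E'_def by auto
  have sO: "(h1 q has_sum (2 * ((t1 + t2) + (t3/2 + (t4 + t5))))) (E \<union> E')"
    by (rule refl_double[OF sE h1_neg ABE BAE DE])
  have "E \<union> E' = O1" unfolding E_def E'_def O1_def by (auto dest: covE)
  with sO have sO': "(h1 q has_sum (2 * ((t1 + t2) + (t3/2 + (t4 + t5))))) O1" by simp
  have "(h1 q has_sum t0) O1" using t1_O[OF q] unfolding t0_def O1_def .
  with sO' have eq: "t0 = 2 * ((t1 + t2) + (t3/2 + (t4 + t5)))" using has_sum_unique by blast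
  have "4 * (ram_psi (q^3) * ram_psi (q^5)) = 4 * (
           ram_phi (q^60) * ram_psi (q^8) + q^14 * ram_phi (q^4) * ram_psi (q^120)
         + q^3 * ram_psi (q^12) * ram_psi (q^20) + q^5 * ram_phi (q^40) * ram_psi (q^48)
         + q^9 * ram_phi (q^24) * ram_psi (q^80))"
    using eq unfolding t0_def t1_def t2_def t3_def t4_def t5_def
    by (simp add: algebra_simps)
  then show ?thesis unfolding mult_cancel_left by simp
qed


lemma id2:
  fixes q :: complex
  assumes q: "norm q < 1"
  shows "ram_psi q * ram_psi (q^15) =
           ram_phi (q^120) * ram_psi (q^16) + q^28 * ram_phi (q^8) * ram_psi (q^240)
         + q^6 * ram_psi (q^4) * ram_psi (q^60) + q * ram_phi (q^20) * ram_psi (q^24)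
         + q^3 * ram_phi (q^12) * ram_psi (q^40)"
proof -
  define K1 where "K1 = {(x::int,y::int). x mod 8 = 4 \<and> y mod 8 = 0}"
  define K2 where "K2 = {(x::int,y::int). x mod 8 = 0 \<and> y mod 8 = 4}"
  define K3h where "K3h = {(x::int,y::int). x mod 4 = 2 \<and> y mod 4 = 2 \<and> (x-y) mod 8 = 0}"
  define K3h' where "K3h' = {(x::int,y::int). x mod 4 = 2 \<and> y mod 4 = 2 \<and> (x-y) mod 8 = 4}"
  define R where "R = {(x::int,y::int). x mod 2 = 1 \<and> y mod 2 = 1 \<and> (x-y) mod 8 = 0}"
  define K4 where "K4 = {(x::int,y::int). x mod 2 = 1 \<and> y mod 2 = 1 \<and> (x-3*y) mod 16 = 0}"
  define K5 where "K5 = {(x::int,y::int). x mod 2 = 1 \<and> y mod 2 = 1 \<and> (x-3*y) mod 16 = 8}"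
  define X where "X = {(x::int,y::int). x mod 2 = 1 \<and> y mod 2 = 1 \<and> ((x-y) mod 8 = 0 \<or> (x-3*y) mod 8 = 0)}"
  define X' where "X' = {(x::int,y::int). x mod 2 = 1 \<and> y mod 2 = 1 \<and> ((x+y) mod 8 = 0 \<or> (x+3*y) mod 8 = 0)}"
  define O1 where "O1 = {(x::int,y::int). x mod 2 = 1 \<and> y mod 2 = 1}"
  define t1 where "t1 = q^0 * (ram_phi (q^120) * (2 * ram_psi (q^16)))"
  define t2 where "t2 = q^28 * (ram_phi (q^8) * (2 * ram_psi (q^240)))"
  define t3 where "t3 = q^6 * ((2 * ram_psi (q^4)) * (2 * ram_psi (q^60)))"
  define t4 where "t4 = q^1 * (ram_phi (q^20) * (2 * ram_psi (q^24)))"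
  define t5 where "t5 = q^3 * (ram_phi (q^12) * (2 * ram_psi (q^40)))"
  define t0 where "t0 = q^0 * ((2 * ram_psi (q^1)) * (2 * ram_psi (q^15)))"
  have sK3: "(h2 q has_sum t3) (K3h \<union> K3h')"
  proof -
    have "{(x::int,y::int). x mod 4 = 2 \<and> y mod 4 = 2} = K3h \<union> K3h'"
      unfolding K3h_def K3h'_def by (auto dest: cK3)
    with t2_K3[OF q] show ?thesis unfolding t3_def by simp
  qed
  have AB3: "\<And>x y. (x,y) \<in> K3h \<Longrightarrow> (-x,y) \<in> K3h'"
    unfolding K3h_def K3h'_def mem_Collect_eq case_prod_conv by (rule rK3)
  have BA3: "\<And>x y. (x,y) \<in> K3h' \<Longrightarrow> (-x,y) \<in> K3h"
    unfolding K3h_def K3h'_def mem_Collect_eq case_prod_conv by (rule rK3')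
  have D3: "K3h \<inter> K3h' = {}" unfolding K3h_def K3h'_def by auto
  have sK3h: "(h2 q has_sum (t3/2)) K3h"
    by (rule refl_half[OF sK3 h2_neg AB3 BA3 D3])
  have sK2: "(h2 q has_sum (t2 + t3/2)) (K2 \<union> K3h)"
    by (rule has_sum_Un_disjoint[OF _ sK3h]) (use t2_K2[OF q] in \<open>auto simp: t2_def K2_def K3h_def dest: m80\<close>)
  have sU: "(h2 q has_sum (t1 + (t2 + t3/2))) (K1 \<union> (K2 \<union> K3h))"
    by (rule has_sum_Un_disjoint[OF _ sK2]) (use t2_K1[OF q] in \<open>auto simp: t1_def K1_def K2_def K3h_def dest: m84\<close>)
  have sR: "(h2 q has_sum (t1 + (t2 + t3/2))) R"
  proof (rule invol_sum[OF sU, where j="\<lambda>(x,y). ((x-15*y) div 4, (x+y) div 4)" and i="\<lambda>(x,y). ((x+15*y) div 4, (y-x) div 4)"])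
    fix x y :: int
    assume a: "(x,y) \<in> K1 \<union> (K2 \<union> K3h)"
    have "\<exists>a b. 4*a = x-15*y \<and> 4*b = x+y \<and> ((a) mod 2 = 1 \<and> (b) mod 2 = 1 \<and> (a-b) mod 8 = 0)"
      using a m2_K1[of x y] m2_K2[of x y] m2_K3[of x y] unfolding K1_def K2_def K3h_def by auto
    then obtain a where "\<exists>b. 4*a = x-15*y \<and> 4*b = x+y \<and> ((a) mod 2 = 1 \<and> (b) mod 2 = 1 \<and> (a-b) mod 8 = 0)"
      by (rule exE)
    then obtain b where ab0: "4*a = x-15*y \<and> 4*b = x+y \<and> ((a) mod 2 = 1 \<and> (b) mod 2 = 1 \<and> (a-b) mod 8 = 0)"
      by (rule exE)
    have ab: "4*a = x-15*y" "4*b = x+y" "(a) mod 2 = 1 \<and> (b) mod 2 = 1 \<and> (a-b) mod 8 = 0"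
      using ab0 by (rule conjunct1, rule conjunct1[OF conjunct2], rule conjunct2[OF conjunct2])
    show "(\<lambda>(x,y). ((x-15*y) div 4, (x+y) div 4)) (x,y) \<in> R \<and>
       (\<lambda>(x,y). ((x+15*y) div 4, (y-x) div 4)) ((\<lambda>(x,y). ((x-15*y) div 4, (x+y) div 4)) (x,y)) = (x,y) \<and>
       h2 q ((\<lambda>(x,y). ((x-15*y) div 4, (x+y) div 4)) (x,y)) = h2 q (x,y)"
      unfolding bij_step2(1)[OF ab(1,2)] bij_step2(2)[OF ab(1,2)] bij_step2(3)[OF ab(1,2)]
      using ab(3) unfolding R_def by simp
  next
    fix x y :: int
    assume a: "(x,y) \<in> R"
    have "\<exists>a b. 4*a = x+15*y \<and> 4*b = y-x \<and> (((a) mod 8 = 4 \<and> (b) mod 8 = 0) \<or> ((a) mod 8 = 0 \<and> (b) mod 8 = 4) \<or> ((a) mod 4 = 2 \<and> (b) mod 4 = 2 \<and> (a-b) mod 8 = 0))"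
      using a by (intro m2_R) (auto simp: R_def)
    then obtain a where "\<exists>b. 4*a = x+15*y \<and> 4*b = y-x \<and>
      (((a) mod 8 = 4 \<and> (b) mod 8 = 0) \<or> ((a) mod 8 = 0 \<and> (b) mod 8 = 4) \<or> ((a) mod 4 = 2 \<and> (b) mod 4 = 2 \<and> (a-b) mod 8 = 0))"
      by (rule exE)
    then obtain b where ab0: "4*a = x+15*y \<and> 4*b = y-x \<and>
      (((a) mod 8 = 4 \<and> (b) mod 8 = 0) \<or> ((a) mod 8 = 0 \<and> (b) mod 8 = 4) \<or> ((a) mod 4 = 2 \<and> (b) mod 4 = 2 \<and> (a-b) mod 8 = 0))"
      by (rule exE)
    have ab: "4*a = x+15*y" "4*b = y-x"
      "((a) mod 8 = 4 \<and> (b) mod 8 = 0) \<or> ((a) mod 8 = 0 \<and> (b) mod 8 = 4) \<or> ((a) mod 4 = 2 \<and> (b) mod 4 = 2 \<and> (a-b) mod 8 = 0)"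
      using ab0 by (rule conjunct1, rule conjunct1[OF conjunct2], rule conjunct2[OF conjunct2])
    show "(\<lambda>(x,y). ((x+15*y) div 4, (y-x) div 4)) (x,y) \<in> K1 \<union> (K2 \<union> K3h) \<and>
       (\<lambda>(x,y). ((x-15*y) div 4, (x+y) div 4)) ((\<lambda>(x,y). ((x+15*y) div 4, (y-x) div 4)) (x,y)) = (x,y)"
      unfolding bij_step2'(1)[OF ab(1,2)] bij_step2'(2)[OF ab(1,2)]
      using ab(3) unfolding K1_def K2_def K3h_def by auto
  qed
  have sK45: "(h2 q has_sum (t4 + t5)) (K4 \<union> K5)"
    by (rule has_sum_Un_disjoint) (use t2_K4[OF q] t2_K5[OF q] in \<open>auto simp: t4_def t5_def K4_def K5_def\<close>)
  have DR: "R \<inter> (K4 \<union> K5) = {}"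
  proof -
    have "False" if "(x,y) \<in> R" "(x,y) \<in> K4 \<union> K5" for x y
    proof -
      have h: "x mod 2 = 1 \<and> y mod 2 = 1 \<and> (x-y) mod 8 = 0"
        using that(1) unfolding R_def mem_Collect_eq case_prod_conv .
      have h': "(x-3*y) mod 16 = 0 \<or> (x-3*y) mod 16 = 8"
        using that(2) unfolding K4_def K5_def Un_iff mem_Collect_eq case_prod_conv by blast
      then show False
      proof
        assume "(x-3*y) mod 16 = 0" then show False by (rule g16a[OF conjunct1[OF conjunct2[OF h]] conjunct2[OF conjunct2[OF h]]])
      next
        assume "(x-3*y) mod 16 = 8" then show False by (rule g16b[OF conjunct1[OF conjunct2[OF h]] conjunct2[OF conjunct2[OF h]]])
      qed
    qed
    then show ?thesis by auto
  qed
  have sX0: "(h2 q has_sum ((t1 + (t2 + t3/2)) + (t4 + t5))) (R \<union> (K4 \<union> K5))"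
    by (rule has_sum_Un_disjoint[OF sR sK45 DR])
  have "R \<union> (K4 \<union> K5) = X" unfolding R_def K4_def K5_def X_def by (auto simp: cov8)
  with sX0 have sX: "(h2 q has_sum ((t1 + (t2 + t3/2)) + (t4 + t5))) X" by simp
  have ABX: "(-x,y) \<in> X'" if "(x,y) \<in> X" for x y
  proof -
    have h: "x mod 2 = 1 \<and> y mod 2 = 1 \<and> ((x-y) mod 8 = 0 \<or> (x-3*y) mod 8 = 0)"
      using that unfolding X_def mem_Collect_eq case_prod_conv .
    have h1: "x mod 2 = 1" "y mod 2 = 1" "(x-y) mod 8 = 0 \<or> (x-3*y) mod 8 = 0"
      using h by (rule conjunct1, rule conjunct1[OF conjunct2], rule conjunct2[OF conjunct2])
    from h1(3) show ?thesis
    proof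
      assume c: "(x-y) mod 8 = 0"
      show ?thesis unfolding X'_def mem_Collect_eq case_prod_conv
        by (rule rXa) (intro conjI h1(1) h1(2) c)
    next
      assume c: "(x-3*y) mod 8 = 0"
      show ?thesis unfolding X'_def mem_Collect_eq case_prod_conv
        by (rule rXb) (intro conjI h1(1) h1(2) c)
    qed
  qed
  have BAX: "(-x,y) \<in> X" if "(x,y) \<in> X'" for x y
  proof -
    have h: "x mod 2 = 1 \<and> y mod 2 = 1 \<and> ((x+y) mod 8 = 0 \<or> (x+3*y) mod 8 = 0)"
      using that unfolding X'_def mem_Collect_eq case_prod_conv .
    have h1: "x mod 2 = 1" "y mod 2 = 1" "(x+y) mod 8 = 0 \<or> (x+3*y) mod 8 = 0"
      using h by (rule conjunct1, rule conjunct1[OF conjunct2], rule conjunct2[OF conjunct2])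
    from h1(3) show ?thesis
    proof
      assume c: "(x+y) mod 8 = 0"
      show ?thesis unfolding X_def mem_Collect_eq case_prod_conv
        by (rule rXc) (intro conjI h1(1) h1(2) c)
    next
      assume c: "(x+3*y) mod 8 = 0"
      show ?thesis unfolding X_def mem_Collect_eq case_prod_conv
        by (rule rXd) (intro conjI h1(1) h1(2) c)
    qed
  qed
  have DX: "X \<inter> X' = {}"
  proof -
    have "False" if "(x,y) \<in> X" "(x,y) \<in> X'" for x y
    proof -
      have h: "x mod 2 = 1 \<and> y mod 2 = 1 \<and> ((x-y) mod 8 = 0 \<or> (x-3*y) mod 8 = 0)"
        using that(1) unfolding X_def mem_Collect_eq case_prod_conv .
      have h': "x mod 2 = 1 \<and> y mod 2 = 1 \<and> ((x+y) mod 8 = 0 \<or> (x+3*y) mod 8 = 0)"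
        using that(2) unfolding X'_def mem_Collect_eq case_prod_conv .
      have y: "y mod 2 = 1" using h by (rule conjunct1[OF conjunct2])
      have d1: "(x-y) mod 8 = 0 \<or> (x-3*y) mod 8 = 0" using h by (rule conjunct2[OF conjunct2])
      have d2: "(x+y) mod 8 = 0 \<or> (x+3*y) mod 8 = 0" using h' by (rule conjunct2[OF conjunct2])
      from d1 show False
      proof
        assume a1: "(x-y) mod 8 = 0"
        from d2 show False
        proof
          assume "(x+y) mod 8 = 0" then show False by (rule dX1[OF y a1])
        next
          assume "(x+3*y) mod 8 = 0" then show False by (rule dX2[OF y a1])
        qed
      next
        assume a1: "(x-3*y) mod 8 = 0"
        from d2 show False
        proof
          assume "(x+y) mod 8 = 0" then show False by (rule dX3[OF y a1])
        next
          assume "(x+3*y) mod 8 = 0" then show False by (rule dX4[OF y a1])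
        qed
      qed
    qed
    then show ?thesis by auto
  qed
  have sO: "(h2 q has_sum (2 * ((t1 + (t2 + t3/2)) + (t4 + t5)))) (X \<union> X')"
    by (rule refl_double[OF sX h2_neg ABX BAX DX])
  have "X \<union> X' = O1" unfolding X_def X'_def O1_def by (auto dest: covX)
  with sO have sO': "(h2 q has_sum (2 * ((t1 + (t2 + t3/2)) + (t4 + t5)))) O1" by simp
  have "(h2 q has_sum t0) O1" using t2_O[OF q] unfolding t0_def O1_def .
  with sO' have eq: "t0 = 2 * ((t1 + (t2 + t3/2)) + (t4 + t5))" using has_sum_unique by blast
  have "4 * (ram_psi q * ram_psi (q^15)) = 4 * (
           ram_phi (q^120) * ram_psi (q^16) + q^28 * ram_phi (q^8) * ram_psi (q^240)
         + q^6 * ram_psi (q^4) * ram_psi (q^60) + q * ram_phi (q^20) * ram_psi (q^24)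
         + q^3 * ram_phi (q^12) * ram_psi (q^40))"
    using eq unfolding t0_def t1_def t2_def t3_def t4_def t5_def
    by (simp add: algebra_simps)
  then show ?thesis unfolding mult_cancel_left by simp
qed

theorem lemma6p2:
  fixes q :: complex
  assumes "norm q < 1"
  shows "(ram_psi (q^3) * ram_psi (q^5) =
           ram_phi (q^60) * ram_psi (q^8) + q^14 * ram_phi (q^4) * ram_psi (q^120)
         + q^3 * ram_psi (q^12) * ram_psi (q^20) + q^5 * ram_phi (q^40) * ram_psi (q^48)
         + q^9 * ram_phi (q^24) * ram_psi (q^80)) \<and>
         (ram_psi q * ram_psi (q^15) =
           ram_phi (q^120) * ram_psi (q^16) + q^28 * ram_phi (q^8) * ram_psi (q^240)
         + q^6 * ram_psi (q^4) * ram_psi (q^60) + q * ram_phi (q^20) * ram_psi (q^24)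
         + q^3 * ram_phi (q^12) * ram_psi (q^40))"
  using id1[OF assms] id2[OF assms] by blast


end
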